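(* Let $G$ be a simple digraph with $n$ vertices $v_1,\ldots,v_n$, $m$ arcs and $p$ components $C_1,\ldots,C_p$, and let $M_1=m+\frac12\sum_{i=1}^n(d_i^+-d_i^-)^2$. If $SLE(G)=\sqrt{2M_1(n-p)}$, then each component $C_i$ is Eulerian (every vertex of $C_i$ has equal in-degree and out-degree) and has an odd number of vertices.
   Context: A simple digraph is an orientation of a simple undirected graph (no loops, and between two distinct vertices at most one arc, in one direction). Components are the connected components of the underlying undirected graph. $d_i^+,d_i^-$ are the out- and in-degree of $v_i$. The skew-adjacency matrix $S(G)=[s_{ij}]$ has $s_{ij}=1$ if $(v_i,v_j)$ is an arc, $s_{ij}=-1$ if $(v_j,v_i)$ is an arc, and $0$ otherwise. $\widetilde{D}(G)=\mathrm{diag}(d_1^+-d_1^-,\ldots,d_n^+-d_n^-)$, $\widetilde{SL}(G)=\widetilde{D}(G)-S(G)$, and $SLE(G)=\sum_{i=1}^n|\mu_i|$ where $\mu_1,\ldots,\mu_n$ are the eigenvalues of $\widetilde{SL}(G)$ counted with algebraic multiplicity. *)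

theory Defs
  imports Complex_Main "Jordan_Normal_Form.Char_Poly"
begin

definition simple_digraph :: "nat \<Rightarrow> (nat \<times> nat) set \<Rightarrow> bool" where
  "simple_digraph n A \<longleftrightarrow> A \<subseteq> {0..<n} \<times> {0..<n} \<and> (\<forall>i. (i,i) \<notin> A)
     \<and> (\<forall>i j. (i,j) \<in> A \<longrightarrow> (j,i) \<notin> A)"

definition outdeg :: "(nat \<times> nat) set \<Rightarrow> nat \<Rightarrow> nat" where
  "outdeg A i = card {j. (i,j) \<in> A}"

definition indeg :: "(nat \<times> nat) set \<Rightarrow> nat \<Rightarrow> nat" where
  "indeg A i = card {j. (j,i) \<in> A}"

definition components :: "nat \<Rightarrow> (nat \<times> nat) set \<Rightarrow> nat set set" where
  "components n A = {0..<n} // ((A \<union> A\<inverse>)\<^sup>*)"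

definition skew_adj :: "nat \<Rightarrow> (nat \<times> nat) set \<Rightarrow> complex mat" where
  "skew_adj n A = mat n n (\<lambda>(i,j). if (i,j) \<in> A then 1 else if (j,i) \<in> A then -1 else 0)"

definition Dtilde :: "nat \<Rightarrow> (nat \<times> nat) set \<Rightarrow> complex mat" where
  "Dtilde n A = mat n n (\<lambda>(i,j). if i = j then of_int (int (outdeg A i) - int (indeg A i)) else 0)"

definition skew_lap :: "nat \<Rightarrow> (nat \<times> nat) set \<Rightarrow> complex mat" where
  "skew_lap n A = Dtilde n A - skew_adj n A"

definition SLE :: "nat \<Rightarrow> (nat \<times> nat) set \<Rightarrow> real" where
  "SLE n A = (\<Sum>\<mu> \<in> {\<mu>. poly (char_poly (skew_lap n A)) \<mu> = 0}.
      real (order \<mu> (char_poly (skew_lap n A))) * cmod \<mu>)"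

definition M1 :: "nat \<Rightarrow> (nat \<times> nat) set \<Rightarrow> real" where
  "M1 n A = real (card A) + (1/2) * (\<Sum>i<n. (real (outdeg A i) - real (indeg A i))^2)"

end

theory Submission
  imports Defs
begin

definition cadj :: "complex mat \<Rightarrow> complex mat" where
  "cadj X = mat (dim_col X) (dim_row X) (\<lambda>(i,j). cnj (X $$ (j,i)))"

definition unitary :: "nat \<Rightarrow> complex mat \<Rightarrow> bool" where
  "unitary n U \<longleftrightarrow> U \<in> carrier_mat n n \<and> cadj U * U = 1\<^sub>m n \<and> U * cadj U = 1\<^sub>m n"

definition cinner :: "nat \<Rightarrow> complex vec \<Rightarrow> complex vec \<Rightarrow> complex" where
  "cinner n x y = (\<Sum>l<n. cnj (x$l) * y$l)"

lemma cadj_carrier[simp]: "X \<in> carrier_mat a b \<Longrightarrow> cadj X \<in> carrier_mat b a"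
  by (auto simp: cadj_def)

lemma cadj_dims[simp]: "dim_row (cadj X) = dim_col X" "dim_col (cadj X) = dim_row X"
  by (auto simp: cadj_def)

lemma index_cadj[simp]: "i < dim_col X \<Longrightarrow> j < dim_row X \<Longrightarrow> cadj X $$ (i,j) = cnj (X $$ (j,i))"
  by (auto simp: cadj_def)

lemma mult_entry: "A \<in> carrier_mat a b \<Longrightarrow> B \<in> carrier_mat b c \<Longrightarrow> i < a \<Longrightarrow> j < c \<Longrightarrow>
  (A * B) $$ (i,j) = (\<Sum>l<b. A $$ (i,l) * B $$ (l,j))"
  by (auto simp: scalar_prod_def lessThan_atLeast0 intro!: sum.cong)

lemma mult_vec_entry: "A \<in> carrier_mat a b \<Longrightarrow> v \<in> carrier_vec b \<Longrightarrow> i < a \<Longrightarrow>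
  (A *\<^sub>v v) $ i = (\<Sum>l<b. A $$ (i,l) * v $ l)"
  by (auto simp: scalar_prod_def lessThan_atLeast0 intro!: sum.cong)

lemma cadj_mult: assumes "X \<in> carrier_mat a b" "Y \<in> carrier_mat b c"
  shows "cadj (X * Y) = cadj Y * cadj X"
proof (rule eq_matI)
  fix i j assume "i < dim_row (cadj Y * cadj X)" "j < dim_col (cadj Y * cadj X)"
  then have ij: "i < c" "j < a" using assms by auto
  have "cadj (X*Y) $$ (i,j) = cnj ((X*Y) $$ (j,i))" using ij assms by simp
  also have "\<dots> = (\<Sum>l<b. cnj (X $$ (j,l)) * cnj (Y $$ (l,i)))"
    by (subst mult_entry[OF assms], insert ij, auto)
  also have "\<dots> = (cadj Y * cadj X) $$ (i,j)"
    by (subst mult_entry[of _ c b _ a], insert ij assms, auto simp: mult.commute intro!: sum.cong)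
  finally show "cadj (X * Y) $$ (i, j) = (cadj Y * cadj X) $$ (i, j)" .
qed (insert assms, auto)

lemma cadj_cadj[simp]: "cadj (cadj X) = X"
  by (rule eq_matI, auto)

lemma cadj_one[simp]: "cadj (1\<^sub>m n) = 1\<^sub>m n"
  by (rule eq_matI, auto)

lemma unitary_carrier: "unitary n U \<Longrightarrow> U \<in> carrier_mat n n" by (simp add: unitary_def)

lemma unitaryI: assumes "U \<in> carrier_mat n n" "cadj U * U = 1\<^sub>m n" shows "unitary n U"
  using assms mat_mult_left_right_inverse[of "cadj U" n U] unfolding unitary_def by auto

lemma unitary_cancel1: "unitary n U \<Longrightarrow> dim_row X = n \<Longrightarrow> U * (cadj U * X) = X"
  unfolding unitary_def by (subst assoc_mult_mat[symmetric, of _ n n _ n _ "dim_col X"], auto)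

lemma unitary_cancel2: "unitary n U \<Longrightarrow> dim_row X = n \<Longrightarrow> cadj U * (U * X) = X"
  unfolding unitary_def by (subst assoc_mult_mat[symmetric, of _ n n _ n _ "dim_col X"], auto)

lemma unitary_cancel1v: "unitary n U \<Longrightarrow> x \<in> carrier_vec n \<Longrightarrow> U *\<^sub>v (cadj U *\<^sub>v x) = x"
  unfolding unitary_def by (subst assoc_mult_mat_vec[symmetric, of _ n n _ n], auto)

lemma unitary_cancel2v: "unitary n U \<Longrightarrow> x \<in> carrier_vec n \<Longrightarrow> cadj U *\<^sub>v (U *\<^sub>v x) = x"
  unfolding unitary_def by (subst assoc_mult_mat_vec[symmetric, of _ n n _ n], auto)

lemma unitary_one: "unitary n (1\<^sub>m n)"
  by (rule unitaryI, auto)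

lemma unitary_mult: assumes U: "unitary n U" and V: "unitary n V" shows "unitary n (U * V)"
proof (rule unitaryI)
  have Uc: "U \<in> carrier_mat n n" and Vc: "V \<in> carrier_mat n n" using U V unitary_def by auto
  show "U * V \<in> carrier_mat n n" using Uc Vc by auto
  have "cadj (U*V) * (U*V) = cadj V * ((cadj U * U) * V)"
    using Uc Vc by (simp add: cadj_mult[OF Uc Vc] assoc_mult_mat[of _ n n _ n _ n])
  also have "\<dots> = 1\<^sub>m n" using U V Vc unfolding unitary_def by simp
  finally show "cadj (U*V) * (U*V) = 1\<^sub>m n" .
qed

lemma cinner_mat: assumes M: "M \<in> carrier_mat n n" and x: "x \<in> carrier_vec n" and y: "y \<in> carrier_vec n"
  shows "cinner n x (M *\<^sub>v y) = cinner n (cadj M *\<^sub>v x) y"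
proof -
  have "cinner n x (M *\<^sub>v y) = (\<Sum>l<n. \<Sum>m<n. cnj (x$l) * (M$$(l,m) * y$m))"
    unfolding cinner_def by (auto simp: mult_vec_entry[OF M y] sum_distrib_left)
  also have "\<dots> = (\<Sum>m<n. \<Sum>l<n. cnj (x$l) * (M$$(l,m) * y$m))" by (rule sum.swap)
  also have "\<dots> = cinner n (cadj M *\<^sub>v x) y"
    unfolding cinner_def
  proof (rule sum.cong[OF refl])
    fix m assume m: "m \<in> {..<n}"
    have "(cadj M *\<^sub>v x) $ m = (\<Sum>l<n. cadj M $$ (m,l) * x $ l)"
      by (rule mult_vec_entry[of _ n n], insert M x m, auto)
    also have "\<dots> = (\<Sum>l<n. cnj (M $$ (l,m)) * x $ l)" using M m by (auto intro!: sum.cong)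
    finally show "(\<Sum>l<n. cnj (x$l) * (M$$(l,m) * y$m)) = cnj ((cadj M *\<^sub>v x) $ m) * y $ m"
      by (simp add: sum_distrib_right sum_distrib_left mult_ac)
  qed
  finally show ?thesis .
qed

lemma delta_sum1[simp]: "(i::nat) < n \<Longrightarrow> (\<Sum>l<n. (if l = i then (1::complex) else 0) * f l) = f i"
  by (subst sum.cong[OF refl, of _ _ "\<lambda>l. if l = i then f l else 0"], auto)

lemma delta_sum2[simp]: "(i::nat) < n \<Longrightarrow> (\<Sum>l<n. f l * (if l = i then (1::complex) else 0)) = f i"
  by (subst sum.cong[OF refl, of _ _ "\<lambda>l. if l = i then f l else 0"], auto)

definition frob :: "complex mat \<Rightarrow> real" where
  "frob X = (\<Sum>i<dim_row X. \<Sum>j<dim_col X. (cmod (X $$ (i,j)))^2)"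

definition ctr :: "complex mat \<Rightarrow> complex" where
  "ctr X = (\<Sum>i<dim_row X. X $$ (i,i))"

lemma ctr_comm: assumes X: "X \<in> carrier_mat a b" and Y: "Y \<in> carrier_mat b a"
  shows "ctr (X * Y) = ctr (Y * X)"
proof -
  have "ctr (X * Y) = (\<Sum>i<a. \<Sum>l<b. X$$(i,l) * Y$$(l,i))"
    unfolding ctr_def using X Y by (auto simp del: index_mult_mat(1) simp: carrier_matD mult_entry[OF X Y] intro!: sum.cong)
  also have "\<dots> = (\<Sum>l<b. \<Sum>i<a. Y$$(l,i) * X$$(i,l))" by (subst sum.swap, simp add: mult.commute)
  also have "\<dots> = ctr (Y * X)"
    unfolding ctr_def using X Y by (auto simp del: index_mult_mat(1) simp: carrier_matD mult_entry[OF Y X] intro!: sum.cong)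
  finally show ?thesis .
qed

lemma frob_ctr: assumes X: "X \<in> carrier_mat a b" shows "complex_of_real (frob X) = ctr (X * cadj X)"
proof -
  have "ctr (X * cadj X) = (\<Sum>i<a. \<Sum>l<b. X$$(i,l) * cnj (X$$(i,l)))"
    unfolding ctr_def using X by (auto simp del: index_mult_mat(1) simp: carrier_matD mult_entry[of X a b "cadj X" a] intro!: sum.cong)
  also have "\<dots> = complex_of_real (frob X)" unfolding frob_def using X
    by (simp only: of_real_sum complex_norm_square carrier_matD)
  finally show ?thesis by simp
qed

lemma frob_unitary: assumes U: "unitary n U" and A: "A \<in> carrier_mat n n"
  shows "frob (cadj U * A * U) = frob A"
proof -
  have Uc: "U \<in> carrier_mat n n" using U unitary_def by auto
  let ?T = "cadj U * A * U"
  have Tc: "?T \<in> carrier_mat n n" using Uc A by auto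
  have "cadj ?T = cadj U * cadj A * U"
    using Uc A by (simp add: cadj_mult[of _ n n _ n] assoc_mult_mat[of _ n n _ n _ n])
  then have "?T * cadj ?T = cadj U * ((A * cadj A) * U)"
    using Uc A by (simp add: assoc_mult_mat[of _ n n _ n _ n] unitary_cancel1[OF U] mult_carrier_mat[of _ n n _ n])
  then have eq: "?T * cadj ?T = cadj U * ((A * cadj A) * U)" .
  have "complex_of_real (frob ?T) = ctr (?T * cadj ?T)" by (rule frob_ctr[OF Tc])
  also have "\<dots> = ctr (((A * cadj A) * U) * cadj U)" unfolding eq
    by (rule ctr_comm[of _ n n], insert Uc A, auto)
  also have "\<dots> = ctr (A * cadj A)" using U[unfolded unitary_def] A Uc
    by (simp add: assoc_mult_mat[of _ n n _ n _ n] unitary_cancel1[OF U] mult_carrier_mat[of _ n n _ n])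
  also have "\<dots> = complex_of_real (frob A)" by (rule frob_ctr[OF A, symmetric])
  finally show ?thesis by simp
qed

lemma cinner_self: "cinner n w w = complex_of_real (\<Sum>l<n. (cmod (w$l))^2)"
  unfolding cinner_def of_real_sum
  by (rule sum.cong[OF refl], simp only: complex_norm_square mult.commute)

lemma cinner_self_nonneg: "(\<Sum>l<n. (cmod (w$l))^2) \<ge> 0"
  by (rule sum_nonneg, simp)

lemma householder:
  fixes n k :: nat
  assumes k: "k < n" and w: "w \<in> carrier_vec n" and w0: "\<forall>i<k. w$i = 0" and nw: "cinner n w w = 1"
  shows "\<exists>V. unitary n V \<and> (\<forall>i<n. \<forall>j<k. V$$(i,j) = (if i = j then 1 else 0)) \<and> (\<forall>i<n. V$$(i,k) = w$i)"
proof (cases "w$k = 1")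
  case True
  have s1: "(\<Sum>l<n. (cmod (w$l))^2) = 1" using nw unfolding cinner_self
    by (metis of_real_eq_1_iff)
  have "(\<Sum>l<n. (cmod (w$l))^2) = (cmod (w$k))^2 + (\<Sum>l\<in>{..<n}-{k}. (cmod (w$l))^2)"
    using k by (subst sum.remove[of _ k], auto)
  with s1 True have "(\<Sum>l\<in>{..<n}-{k}. (cmod (w$l))^2) = 0" by simp
  then have "\<forall>l\<in>{..<n}-{k}. (cmod (w$l))^2 = 0"
    by (subst (asm) sum_nonneg_eq_0_iff, auto)
  then have wz: "\<And>l. l < n \<Longrightarrow> l \<noteq> k \<Longrightarrow> w$l = 0" by auto
  show ?thesis
    by (rule exI[of _ "1\<^sub>m n"], insert k wz True, auto simp: unitary_one)
next
  case False
  define z where "z = 1 - w$k"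
  have z: "z \<noteq> 0" "cnj z \<noteq> 0" using False unfolding z_def by auto
  define \<tau> where "\<tau> = 1 / cnj z"
  define u where "u = vec n (\<lambda>i. (if i = k then 1 else 0) - w$i)"
  have u: "\<And>i. i < n \<Longrightarrow> u$i = (if i = k then 1 else 0) - w$i" unfolding u_def by auto
  define V where "V = mat n n (\<lambda>(i,j). (if i = j then 1 else 0) - \<tau> * u$i * cnj (u$j))"
  have Vc: "V \<in> carrier_mat n n" unfolding V_def by auto
  have Ve: "\<And>i j. i < n \<Longrightarrow> j < n \<Longrightarrow> V $$ (i,j) = (if i = j then 1 else 0) - \<tau> * u$i * cnj (u$j)"
    unfolding V_def by auto
  have N: "(\<Sum>l<n. cnj (u$l) * u$l) = z + cnj z"
  proof -
    have "(\<Sum>l<n. cnj (u$l) * u$l) = (\<Sum>l<n. (if l = k then 1 else 0) * (1 - w$l - cnj (w$l)) + cnj (w$l) * w$l)"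
      by (rule sum.cong[OF refl], auto simp: u algebra_simps)
    also have "\<dots> = (1 - w$k - cnj (w$k)) + cinner n w w"
      unfolding cinner_def sum.distrib using k by simp
    finally show ?thesis using nw unfolding z_def by (simp add: complex_cnj_diff)
  qed
  have unit: "unitary n V"
  proof (rule unitaryI[OF Vc], rule eq_matI)
    fix i j assume "i < dim_row (1\<^sub>m n)" "j < dim_col (1\<^sub>m n)"
    then have ij: "i < n" "j < n" by auto
    have "(cadj V * V) $$ (i,j) = (\<Sum>l<n. cnj (V$$(l,i)) * V$$(l,j))"
      by (subst mult_entry[of _ n n _ n], insert Vc ij, auto intro!: sum.cong)
    also have "\<dots> = (\<Sum>l<n. (if l = i then 1 else 0) * (if l = j then 1 else 0)
         - (if l = i then 1 else 0) * (\<tau> * u$l * cnj (u$j))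
         - (cnj \<tau> * cnj (u$l) * u$i) * (if l = j then 1 else 0)
         + (cnj \<tau> * \<tau> * u$i * cnj (u$j)) * (cnj (u$l) * u$l))"
      by (rule sum.cong[OF refl], insert ij, auto simp: Ve algebra_simps)
    also have "\<dots> = (if i = j then 1 else 0) - \<tau> * u$i * cnj (u$j) - cnj \<tau> * cnj (u$j) * u$i
         + (cnj \<tau> * \<tau> * u$i * cnj (u$j)) * (z + cnj z)"
      using ij by (simp add: sum.distrib sum_subtractf sum_distrib_left[symmetric] N)
    also have "\<dots> = (if i = j then 1 else 0) + u$i * cnj (u$j) * (cnj \<tau> * \<tau> * (z + cnj z) - \<tau> - cnj \<tau>)"
      by (simp add: algebra_simps)
    also have "cnj \<tau> * \<tau> * (z + cnj z) - \<tau> - cnj \<tau> = 0"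
      unfolding \<tau>_def using z by (simp add: field_simps)
    finally show "(cadj V * V) $$ (i,j) = 1\<^sub>m n $$ (i,j)" using ij by simp
  qed (insert Vc, auto)
  show ?thesis
  proof (intro exI[of _ V] conjI allI impI unit)
    fix i j assume ij: "i < n" "j < k"
    then have "u$j = 0" using u[of j] w0 k by auto
    then show "V$$(i,j) = (if i = j then 1 else 0)" using ij k by (simp add: Ve)
  next
    fix i assume i: "i < n"
    have uk: "u$k = z" using u[of k] k unfolding z_def by auto
    have "V$$(i,k) = (if i = k then 1 else 0) - u$i * (\<tau> * cnj z)"
      using i k by (simp add: Ve uk)
    also have "\<tau> * cnj z = 1" unfolding \<tau>_def using z by simp
    finally show "V$$(i,k) = w$i" using i u[of i] by simp
  qed
qed

lemma sum_shift_zero: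
  fixes g :: "nat \<Rightarrow> 'a::comm_monoid_add"
  assumes "k \<le> n" "\<forall>l<k. g l = 0"
  shows "(\<Sum>l<n. g l) = (\<Sum>l<n-k. g (l+k))"
proof -
  have "(\<Sum>l<n. g l) = (\<Sum>l\<in>{0..<k}. g l) + (\<Sum>l\<in>{k..<n}. g l)"
    unfolding lessThan_atLeast0 by (rule sum.atLeastLessThan_concat[symmetric], insert assms, auto)
  also have "(\<Sum>l\<in>{0..<k}. g l) = 0" using assms by simp
  also have "{k..<n} = {0+k..<(n-k)+k}" using assms by simp
  also have "(\<Sum>l\<in>{0+k..<(n-k)+k}. g l) = (\<Sum>l\<in>{0..<n-k}. g (l+k))"
    by (rule sum.shift_bounds_nat_ivl)
  finally show ?thesis by (simp add: lessThan_atLeast0)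
qed

lemma compressed_eigen:
  fixes n k :: nat
  assumes T: "T \<in> carrier_mat n n" and k: "k < n"
  shows "\<exists>w \<mu>. w \<in> carrier_vec n \<and> (\<forall>i<k. w$i = 0) \<and> cinner n w w = 1 \<and>
     (\<forall>a. k \<le> a \<and> a < n \<longrightarrow> (T *\<^sub>v w)$a = \<mu> * w$a)"
proof -
  define m where "m = n - k"
  have m: "m > 0" unfolding m_def using k by auto
  define T' where "T' = mat m m (\<lambda>(i,j). T$$(i+k,j+k))"
  have T'c: "T' \<in> carrier_mat m m" unfolding T'_def by auto
  obtain as where cp: "char_poly T' = (\<Prod>a\<leftarrow>as. [:-a,1:])" and las: "length as = m"
    using char_poly_factorized[OF T'c] by auto
  obtain a as' where as: "as = a # as'" using las m by (cases as, auto)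
  have "poly (char_poly T') a = 0" unfolding cp as by simp
  then have "eigenvalue T' a" using eigenvalue_root_char_poly[OF T'c] by simp
  then obtain v where ev: "eigenvector T' v a" unfolding eigenvalue_def by auto
  have vc: "v \<in> carrier_vec m" and vnz: "v \<noteq> 0\<^sub>v m" and Tv: "T' *\<^sub>v v = a \<cdot>\<^sub>v v"
    using ev T'c unfolding eigenvector_def by auto
  obtain l0 where l0: "l0 < m" "v$l0 \<noteq> 0"
  proof (rule ccontr)
    assume "\<not> thesis"
    then have "\<forall>l<m. v$l = 0" using that by blast
    then have "v = 0\<^sub>v m" using vc by (intro eq_vecI, auto)
    with vnz show False by auto
  qed
  define r where "r = (\<Sum>l<m. (cmod (v$l))^2)"
  have "(cmod (v$l0))^2 \<le> r" unfolding r_def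
    by (rule member_le_sum, insert l0, auto)
  moreover have "(cmod (v$l0))^2 > 0" using l0 by simp
  ultimately have r: "r > 0" by linarith
  define s where "s = sqrt r"
  have s: "s > 0" "s * s = r" using r unfolding s_def by auto
  define sc where "sc = complex_of_real s"
  have sc: "sc \<noteq> 0" "cnj sc = sc" "sc * sc = complex_of_real r"
    using s unfolding sc_def by (auto simp flip: of_real_mult)
  define w where "w = vec n (\<lambda>i. if i < k then 0 else v$(i-k) / sc)"
  have wc: "w \<in> carrier_vec n" unfolding w_def by auto
  have we: "\<And>i. i < n \<Longrightarrow> w$i = (if i < k then 0 else v$(i-k) / sc)" unfolding w_def by auto
  show ?thesis
  proof (intro exI[of _ w] exI[of _ a] conjI allI impI wc)
    fix i assume "i < k" then show "w$i = 0" using k we by auto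
  next
    have "cinner n w w = (\<Sum>l<m. cnj (w$(l+k)) * w$(l+k))"
      unfolding cinner_def m_def by (rule sum_shift_zero, insert k we, auto)
    also have "\<dots> = (\<Sum>l<m. cnj (v$l) * v$l) / (sc * sc)"
      unfolding sum_divide_distrib by (rule sum.cong[OF refl], insert sc, auto simp: we m_def)
    also have "(\<Sum>l<m. cnj (v$l) * v$l) = complex_of_real r" using cinner_self[of m v]
      unfolding cinner_def r_def by simp
    finally show "cinner n w w = 1" using sc r by simp
  next
    fix b assume b: "k \<le> b \<and> b < n"
    have "(T *\<^sub>v w)$b = (\<Sum>l<n. T$$(b,l) * w$l)" by (rule mult_vec_entry[OF T wc], insert b, auto)
    also have "\<dots> = (\<Sum>l<m. T$$(b,l+k) * w$(l+k))"
      unfolding m_def by (rule sum_shift_zero, insert k we, auto)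
    also have "\<dots> = (\<Sum>l<m. T'$$(b-k,l) * v$l) / sc"
      unfolding sum_divide_distrib by (rule sum.cong[OF refl], insert b, auto simp: we m_def T'_def)
    also have "(\<Sum>l<m. T'$$(b-k,l) * v$l) = (T' *\<^sub>v v)$(b-k)"
      by (rule mult_vec_entry[symmetric, OF T'c vc], insert b, auto simp: m_def)
    also have "\<dots> = a * v$(b-k)" unfolding Tv using vc b by (auto simp: m_def)
    finally show "(T *\<^sub>v w)$b = a * w$b" using b we by auto
  qed
qed

definition orthonormal :: "nat \<Rightarrow> complex vec list \<Rightarrow> bool" where
  "orthonormal n vs \<longleftrightarrow> (\<forall>v\<in>set vs. v \<in> carrier_vec n) \<and>
     (\<forall>i<length vs. \<forall>j<length vs. cinner n (vs!i) (vs!j) = (if i = j then 1 else 0))"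

lemma mat_unit_vec: fixes M :: "complex mat" assumes M: "M \<in> carrier_mat n n" and j: "j < n"
  shows "M *\<^sub>v unit_vec n j = col M j"
proof (rule eq_vecI)
  fix i assume "i < dim_vec (col M j)"
  then have i: "i < n" using M by auto
  show "(M *\<^sub>v unit_vec n j) $ i = col M j $ i"
    by (subst mult_vec_entry[OF M], insert i j M, auto)
qed (insert M, auto)

lemma V_rows: assumes V: "unitary n V" and k: "k \<le> n"
  and Vc: "\<forall>i<n. \<forall>j<k. V$$(i,j) = (if i = j then 1 else 0)"
  and l: "l < k" and i: "i < n"
shows "V$$(l,i) = (if l = i then 1 else 0)"
proof -
  have Vcar: "V \<in> carrier_mat n n" using V unitary_def by auto
  have "(cadj V * V) $$ (i,l) = (\<Sum>m<n. cnj (V$$(m,i)) * V$$(m,l))"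
    by (subst mult_entry[of _ n n _ n], insert Vcar i l k, auto intro!: sum.cong)
  also have "\<dots> = (\<Sum>m<n. cnj (V$$(m,i)) * (if m = l then 1 else 0))"
    by (rule sum.cong[OF refl], insert Vc l k, auto)
  also have "\<dots> = cnj (V$$(l,i))" using l k by simp
  finally have "cnj (V$$(l,i)) = (if i = l then 1 else 0)"
    using V i l k unfolding unitary_def by simp
  then show ?thesis by (cases "l = i", auto simp: complex_cnj_one_iff)
qed

lemma V_fix: assumes V: "unitary n V" and k: "k \<le> n"
  and Vc: "\<forall>i<n. \<forall>j<k. V$$(i,j) = (if i = j then 1 else 0)"
  and y: "y \<in> carrier_vec n" and y0: "\<forall>a. k \<le> a \<and> a < n \<longrightarrow> y$a = 0"
shows "cadj V *\<^sub>v y = y"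
proof (rule eq_vecI)
  have Vcar: "V \<in> carrier_mat n n" using V unitary_def by auto
  fix i assume "i < dim_vec y"
  then have i: "i < n" using y by auto
  have "(cadj V *\<^sub>v y) $ i = (\<Sum>a<n. cnj (V$$(a,i)) * y$a)"
    by (subst mult_vec_entry[of _ n n], insert Vcar y i, auto intro!: sum.cong)
  also have "\<dots> = (\<Sum>a<n. (if a = i then 1 else 0) * y$a)"
  proof (rule sum.cong[OF refl])
    fix a assume a: "a \<in> {..<n}"
    show "cnj (V$$(a,i)) * y$a = (if a = i then 1 else 0) * y$a"
    proof (cases "a < k")
      case True then show ?thesis using V_rows[OF V k Vc True i] by auto
    next
      case False then show ?thesis using y0 a by auto
    qed
  qed
  also have "\<dots> = y$i" using i by simp
  finally show "(cadj V *\<^sub>v y) $ i = y $ i" .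
qed (insert V y, auto simp: unitary_def)

lemma schur_iter:
  fixes n :: nat
  assumes A: "A \<in> carrier_mat n n" and on: "orthonormal n vs" and ker: "\<forall>v\<in>set vs. A *\<^sub>v v = 0\<^sub>v n"
    and len: "length vs \<le> n"
  shows "k \<le> n \<Longrightarrow> \<exists>U. unitary n U \<and> (\<forall>j<k. \<forall>i<n. j < i \<longrightarrow> (cadj U * A * U)$$(i,j) = 0) \<and>
     (\<forall>j<k. j < length vs \<longrightarrow> col U j = vs!j \<and> (cadj U * A * U)$$(j,j) = 0)"
proof (induction k)
  case 0
  show ?case by (rule exI[of _ "1\<^sub>m n"], auto simp: unitary_one)
next
  case (Suc k)
  then have k: "k < n" by auto
  from Suc obtain U where U: "unitary n U"
    and tri: "\<forall>j<k. \<forall>i<n. j < i \<longrightarrow> (cadj U * A * U)$$(i,j) = 0"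
    and pre: "\<forall>j<k. j < length vs \<longrightarrow> col U j = vs!j \<and> (cadj U * A * U)$$(j,j) = 0" by auto
  have Uc: "U \<in> carrier_mat n n" using U unitary_def by auto
  define T where "T = cadj U * A * U"
  have Tc: "T \<in> carrier_mat n n" unfolding T_def using Uc A by auto
  have "\<exists>w \<mu>. w \<in> carrier_vec n \<and> (\<forall>i<k. w$i = 0) \<and> cinner n w w = 1 \<and>
     (\<forall>a. k \<le> a \<and> a < n \<longrightarrow> (T *\<^sub>v w)$a = \<mu> * w$a) \<and> (k < length vs \<longrightarrow> U *\<^sub>v w = vs!k \<and> \<mu> = 0)"
  proof (cases "k < length vs")
    case True
    define v where "v = vs!k"
    have vin: "v \<in> set vs" unfolding v_def using True by simp
    have vc: "v \<in> carrier_vec n" using on vin unfolding orthonormal_def by blast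
    have Av: "A *\<^sub>v v = 0\<^sub>v n" using ker vin by blast
    define w where "w = cadj U *\<^sub>v v"
    have wc: "w \<in> carrier_vec n" unfolding w_def by (rule mult_mat_vec_carrier[of _ n n], insert Uc vc, auto)
    have Uw: "U *\<^sub>v w = v" unfolding w_def by (rule unitary_cancel1v[OF U vc])
    show ?thesis
    proof (intro exI[of _ w] exI[of _ 0] conjI allI impI wc)
      fix i assume i: "i < k"
      have "w$i = (\<Sum>l<n. cadj U $$ (i,l) * v$l)" unfolding w_def
        by (rule mult_vec_entry[of _ n n], insert Uc vc i k, auto)
      also have "\<dots> = cinner n (col U i) v" unfolding cinner_def
        by (rule sum.cong[OF refl], insert Uc i k, auto)
      also have "col U i = vs!i" using pre i True by auto
      also have "cinner n (vs!i) v = 0" using on i True unfolding orthonormal_def v_def by auto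
      finally show "w$i = 0" .
    next
      have "cinner n w (cadj U *\<^sub>v v) = cinner n (cadj (cadj U) *\<^sub>v w) v"
        by (rule cinner_mat[of "cadj U" n], insert Uc vc wc, auto)
      then have "cinner n w w = cinner n (U *\<^sub>v w) v" unfolding w_def[symmetric] by simp
      also have "\<dots> = 1" unfolding Uw using on True unfolding orthonormal_def v_def by auto
      finally show "cinner n w w = 1" .
    next
      fix a assume a: "k \<le> a \<and> a < n"
      have "T *\<^sub>v w = cadj U *\<^sub>v (A *\<^sub>v (U *\<^sub>v w))"
        unfolding T_def using Uc A wc by (simp add: assoc_mult_mat_vec[of _ n n _ n] mult_carrier_mat[of _ n n _ n])
      also have "\<dots> = 0\<^sub>v n" unfolding Uw Av using Uc by auto
      finally show "(T *\<^sub>v w)$a = 0 * w$a" using a by auto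
    next
      assume "k < length vs"
      show "U *\<^sub>v w = vs!k" using Uw v_def by simp
    qed auto
  next
    case False
    obtain w \<mu> where "w \<in> carrier_vec n" "\<forall>i<k. w$i = 0" "cinner n w w = 1"
      "\<forall>a. k \<le> a \<and> a < n \<longrightarrow> (T *\<^sub>v w)$a = \<mu> * w$a"
      using compressed_eigen[OF Tc k] by blast
    then show ?thesis using False by (intro exI[of _ w] exI[of _ \<mu>], auto)
  qed
  then obtain w \<mu> where wc: "w \<in> carrier_vec n" and w0: "\<forall>i<k. w$i = 0" and nw: "cinner n w w = 1"
    and eig: "\<forall>a. k \<le> a \<and> a < n \<longrightarrow> (T *\<^sub>v w)$a = \<mu> * w$a"
    and wpre: "k < length vs \<longrightarrow> U *\<^sub>v w = vs!k \<and> \<mu> = 0" by blast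
  obtain V where V: "unitary n V" and Vfix: "\<forall>i<n. \<forall>j<k. V$$(i,j) = (if i = j then 1 else 0)"
    and Vk: "\<forall>i<n. V$$(i,k) = w$i"
    using householder[OF k wc w0 nw] by blast
  have Vc: "V \<in> carrier_mat n n" using V unitary_def by auto
  have colVk: "col V k = w" using Vk Vc wc k by (intro eq_vecI, auto)
  have colVj: "\<And>j. j < k \<Longrightarrow> col V j = unit_vec n j" using Vfix Vc k by (intro eq_vecI, auto)
  define U1 where "U1 = U * V"
  have U1: "unitary n U1" unfolding U1_def by (rule unitary_mult[OF U V])
  define T1 where "T1 = cadj U1 * A * U1"
  have T1: "T1 = cadj V * (T * V)" unfolding T1_def U1_def T_def
    using Uc Vc A by (simp add: cadj_mult[OF Uc Vc] assoc_mult_mat[of _ n n _ n _ n] mult_carrier_mat[of _ n n _ n])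
  have T1c: "T1 \<in> carrier_mat n n" unfolding T1
    by (rule mult_carrier_mat[of _ n n], insert Vc Tc, auto)
  have colT1: "\<And>j. j < n \<Longrightarrow> col T1 j = cadj V *\<^sub>v (T *\<^sub>v col V j)"
  proof -
    fix j assume j: "j < n"
    have "col T1 j = cadj V *\<^sub>v col (T * V) j" unfolding T1
      by (rule col_mult2[of _ n n _ n], insert Vc Tc j, auto)
    also have "col (T * V) j = T *\<^sub>v col V j"
      by (rule col_mult2[of _ n n _ n], insert Vc Tc j, auto)
    finally show "col T1 j = cadj V *\<^sub>v (T *\<^sub>v col V j)" .
  qed
  have T1e: "\<And>i j. i < n \<Longrightarrow> j < n \<Longrightarrow> T1 $$ (i,j) = (cadj V *\<^sub>v (T *\<^sub>v col V j)) $ i"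
  proof -
    fix i j assume ij: "i < n" "j < n"
    have "T1 $$ (i,j) = col T1 j $ i" by (rule index_col[symmetric], insert ij T1c, auto)
    then show "T1 $$ (i,j) = (cadj V *\<^sub>v (T *\<^sub>v col V j)) $ i" using colT1 ij by simp
  qed
  have Vk_le: "k \<le> n" using k by simp
  have oldcol: "\<And>j i. j < k \<Longrightarrow> i < n \<Longrightarrow> T1 $$ (i,j) = T $$ (i,j)"
  proof -
    fix j i assume j: "j < k" and i: "i < n"
    have cTc: "col T j \<in> carrier_vec n" by (rule col_carrier_vec[OF _ Tc], insert j k, simp)
    have e1: "T *\<^sub>v col V j = col T j" unfolding colVj[OF j] by (rule mat_unit_vec[OF Tc], insert j k, auto)
    have e2: "cadj V *\<^sub>v col T j = col T j"
      by (rule V_fix[OF V Vk_le Vfix cTc], insert Tc j k tri, auto simp: T_def)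
    have "T1 $$ (i,j) = (cadj V *\<^sub>v (T *\<^sub>v col V j)) $ i" by (rule T1e[OF i], insert j k, simp)
    also have "\<dots> = col T j $ i" unfolding e1 e2 ..
    also have "\<dots> = T $$ (i,j)" using i j k Tc by auto
    finally show "T1 $$ (i,j) = T $$ (i,j)" .
  qed
  define y where "y = T *\<^sub>v w - \<mu> \<cdot>\<^sub>v w"
  have yc: "y \<in> carrier_vec n" unfolding y_def using Tc wc by auto
  have y0: "\<forall>a. k \<le> a \<and> a < n \<longrightarrow> y$a = 0" unfolding y_def using eig Tc wc by auto
  have Tw: "T *\<^sub>v w = \<mu> \<cdot>\<^sub>v w + y" unfolding y_def using Tc wc by (intro eq_vecI, auto)
  have Vw: "cadj V *\<^sub>v w = unit_vec n k"
  proof -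
    have "cadj V *\<^sub>v w = col (cadj V * V) k" unfolding colVk[symmetric]
      using Vc k by (simp add: col_mult2[of _ n n _ n])
    also have "\<dots> = unit_vec n k" using V k unfolding unitary_def by simp
    finally show ?thesis .
  qed
  have newcol: "\<And>i. i < n \<Longrightarrow> T1 $$ (i,k) = \<mu> * (if i = k then 1 else 0) + y$i"
  proof -
    fix i assume i: "i < n"
    have "cadj V *\<^sub>v (T *\<^sub>v col V k) = \<mu> \<cdot>\<^sub>v (cadj V *\<^sub>v w) + cadj V *\<^sub>v y"
      unfolding colVk Tw using Vc wc yc
      by (simp add: mult_add_distrib_mat_vec[of _ n n] mult_mat_vec[of _ n n])
    also have "cadj V *\<^sub>v y = y" by (rule V_fix[OF V Vk_le Vfix yc y0])
    finally show "T1 $$ (i,k) = \<mu> * (if i = k then 1 else 0) + y$i"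
      using T1e[of i k] i k Vw yc by simp
  qed
  have part1: "\<forall>j<Suc k. \<forall>i<n. j < i \<longrightarrow> (cadj U1 * A * U1) $$ (i,j) = 0"
  proof (intro allI impI)
    fix j i assume j: "j < Suc k" and i: "i < n" and ji: "j < i"
    show "(cadj U1 * A * U1) $$ (i,j) = 0"
    proof (cases "j < k")
      case True then show ?thesis using oldcol[OF True i] tri i ji unfolding T1_def T_def by auto
    next
      case False then have "j = k" using j by auto
      then show ?thesis using newcol[OF i] y0 ji i unfolding T1_def by auto
    qed
  qed
  have part2: "\<forall>j<Suc k. j < length vs \<longrightarrow> col U1 j = vs ! j \<and> (cadj U1 * A * U1) $$ (j, j) = 0"
  proof (intro allI impI)
    fix j assume j: "j < Suc k" and jl: "j < length vs"
    show "col U1 j = vs ! j \<and> (cadj U1 * A * U1) $$ (j, j) = 0"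
    proof (cases "j < k")
      case True
      have "col U1 j = U *\<^sub>v col V j" unfolding U1_def by (rule col_mult2[of _ n n _ n], insert Uc Vc True k, auto)
      also have "\<dots> = col U j" unfolding colVj[OF True] by (rule mat_unit_vec[OF Uc], insert True k, auto)
      finally show ?thesis using pre True jl oldcol[OF True, of j] k unfolding T1_def T_def by auto
    next
      case False then have jk: "j = k" using j by auto
      have "col U1 k = U *\<^sub>v col V k" unfolding U1_def by (rule col_mult2[of _ n n _ n], insert Uc Vc k, auto)
      then show ?thesis using wpre jk jl newcol[of k] y0 k colVk unfolding T1_def by auto
    qed
  qed
  show ?case using part1 part2 U1 by blast
qed

lemma schur_prescribed:
  fixes n :: nat
  assumes A: "A \<in> carrier_mat n n" and on: "orthonormal n vs" and ker: "\<forall>v\<in>set vs. A *\<^sub>v v = 0\<^sub>v n"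
    and len: "length vs \<le> n"
  shows "\<exists>U T. unitary n U \<and> T \<in> carrier_mat n n \<and> upper_triangular T \<and> T = cadj U * A * U \<and>
     A = U * T * cadj U \<and> (\<forall>j<length vs. col U j = vs!j \<and> T$$(j,j) = 0)"
proof -
  obtain U where U: "unitary n U" and tri: "\<forall>j<n. \<forall>i<n. j < i \<longrightarrow> (cadj U * A * U)$$(i,j) = 0"
    and pre: "\<forall>j<n. j < length vs \<longrightarrow> col U j = vs!j \<and> (cadj U * A * U)$$(j,j) = 0"
    using schur_iter[OF A on ker len, of n] by auto
  have Uc: "U \<in> carrier_mat n n" using U unitary_def by auto
  have Tc: "cadj U * A * U \<in> carrier_mat n n" using Uc A by auto
  have eq: "A = U * (cadj U * A * U) * cadj U"
    using Uc A U[unfolded unitary_def]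
    by (simp add: assoc_mult_mat[of _ n n _ n _ n] mult_carrier_mat[of _ n n _ n] unitary_cancel1[OF U])
  have ut: "upper_triangular (cadj U * A * U)" unfolding upper_triangular_def using tri Tc by auto
  show ?thesis
    by (rule exI[of _ U], rule exI[of _ "cadj U * A * U"], intro conjI U Tc ut refl eq, insert pre len, auto)
qed

definition rel :: "(nat \<times> nat) set \<Rightarrow> (nat \<times> nat) set" where
  "rel A = (A \<union> A\<inverse>)\<^sup>*"

definition dr :: "(nat \<times> nat) set \<Rightarrow> nat \<Rightarrow> real" where
  "dr A i = real (outdeg A i) - real (indeg A i)"

definition sr :: "(nat \<times> nat) set \<Rightarrow> nat \<Rightarrow> nat \<Rightarrow> real" where
  "sr A i j = (if (i,j) \<in> A then 1 else if (j,i) \<in> A then -1 else 0)"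

lemma rel_sym: "(x,y) \<in> rel A \<Longrightarrow> (y,x) \<in> rel A"
proof -
  assume "(x,y) \<in> rel A"
  then have "(y,x) \<in> ((A \<union> A\<inverse>)\<^sup>*)\<inverse>" unfolding rel_def by simp
  then have "(y,x) \<in> ((A \<union> A\<inverse>)\<inverse>)\<^sup>*" by (simp add: rtrancl_converse)
  moreover have "(A \<union> A\<inverse>)\<inverse> = A \<union> A\<inverse>" by auto
  ultimately show ?thesis unfolding rel_def by simp
qed

lemma rel_trans: "(x,y) \<in> rel A \<Longrightarrow> (y,z) \<in> rel A \<Longrightarrow> (x,z) \<in> rel A"
  unfolding rel_def by (rule rtrancl_trans)

lemma rel_arc: "(i,j) \<in> A \<Longrightarrow> (i,j) \<in> rel A" unfolding rel_def by auto

lemma rel_refl: "(i,i) \<in> rel A" unfolding rel_def by auto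

lemma rel_bound: assumes G: "simple_digraph n A" and v: "v < n" and r: "(v,x) \<in> rel A"
  shows "x < n"
  using r[unfolded rel_def] 
proof (induction rule: rtrancl_induct)
  case base then show ?case using v .
next
  case (step y z)
  then show ?case using G unfolding simple_digraph_def by auto
qed

lemma components_alt: "components n A = (\<lambda>v. rel A `` {v}) ` {0..<n}"
  unfolding components_def quotient_def rel_def by auto

lemma comp_elem: "C \<in> components n A \<Longrightarrow> \<exists>v<n. C = rel A `` {v}"
  unfolding components_alt by auto

lemma comp_sub: assumes G: "simple_digraph n A" and C: "C \<in> components n A"
  shows "C \<subseteq> {..<n}"
  using comp_elem[OF C] rel_bound[OF G] by auto

lemma comp_nonempty: "C \<in> components n A \<Longrightarrow> C \<noteq> {}"
  using comp_elem rel_refl by fastforce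

lemma comp_closed: assumes C: "C \<in> components n A" and a: "(i,j) \<in> A"
  shows "i \<in> C \<longleftrightarrow> j \<in> C"
proof -
  obtain v where C: "C = rel A `` {v}" using comp_elem[OF C] by auto
  have "(i,j) \<in> rel A" "(j,i) \<in> rel A" using rel_arc[OF a] rel_sym by auto
  then show ?thesis unfolding C using rel_trans by blast
qed

lemma comp_eq: assumes C1: "C1 \<in> components n A" and C2: "C2 \<in> components n A"
  and x1: "x \<in> C1" and x2: "x \<in> C2" shows "C1 = C2"
proof -
  obtain v1 where v1: "C1 = rel A `` {v1}" using comp_elem[OF C1] by auto
  obtain v2 where v2: "C2 = rel A `` {v2}" using comp_elem[OF C2] by auto
  have "(v1,x) \<in> rel A" "(v2,x) \<in> rel A" using x1 x2 v1 v2 by auto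
  then have 12: "(v1,v2) \<in> rel A" and 21: "(v2,v1) \<in> rel A" using rel_sym rel_trans by blast+
  show ?thesis unfolding v1 v2 using 12 21 rel_trans by blast
qed

lemma comp_of: assumes v: "v < n" shows "\<exists>C\<in>components n A. v \<in> C"
  using v rel_refl unfolding components_alt by fastforce

lemma comp_finite: "finite (components n A)"
  unfolding components_alt by auto

lemma comp_card_le: "card (components n A) \<le> n"
  unfolding components_alt using card_image_le[of "{0..<n}"] by auto

lemma comp_card_less: assumes G: "simple_digraph n A" and a: "(i,j) \<in> A"
  shows "card (components n A) < n"
proof -
  have ij: "i < n" "j < n" "i \<noteq> j" using G a unfolding simple_digraph_def by auto
  have "rel A `` {i} = rel A `` {j}"
    using rel_arc[OF a] rel_sym rel_trans by blast
  then have "\<not> inj_on (\<lambda>v. rel A `` {v}) {0..<n}" using ij unfolding inj_on_def by fastforce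
  then have "card ((\<lambda>v. rel A `` {v}) ` {0..<n}) \<noteq> card {0..<n}"
    using eq_card_imp_inj_on[of "{0..<n}"] by auto
  then show ?thesis unfolding components_alt using card_image_le[of "{0..<n}"] le_neq_implies_less by fastforce
qed

lemma sl_entry: "i < n \<Longrightarrow> j < n \<Longrightarrow>
  skew_lap n A $$ (i,j) = complex_of_real ((if i = j then dr A i else 0) - sr A i j)"
  unfolding skew_lap_def Dtilde_def skew_adj_def dr_def sr_def by auto

lemma sl_carrier: "skew_lap n A \<in> carrier_mat n n"
  unfolding skew_lap_def Dtilde_def skew_adj_def by auto

lemma sr_antisym: "simple_digraph n A \<Longrightarrow> sr A j i = - sr A i j"
  unfolding sr_def simple_digraph_def by auto

lemma sr_self: "simple_digraph n A \<Longrightarrow> sr A i i = 0"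
  unfolding sr_def simple_digraph_def by auto

lemma sum_indicator_card:
  assumes "S \<subseteq> {..<(n::nat)}"
  shows "(\<Sum>j<n. if j \<in> S then (1::real) else 0) = real (card S)"
proof -
  have "(\<Sum>j<n. if j \<in> S then (1::real) else 0) = (\<Sum>j\<in>{..<n} \<inter> S. 1)"
    by (subst sum.inter_restrict, auto)
  also have "{..<n} \<inter> S = S" using assms by auto
  finally show ?thesis by simp
qed

lemma row_sum: assumes G: "simple_digraph n A" and k: "k < n"
  shows "(\<Sum>j<n. sr A k j) = dr A k"
proof -
  have "(\<Sum>j<n. sr A k j) = (\<Sum>j<n. (if j \<in> {j. (k,j) \<in> A} then 1 else 0) - (if j \<in> {j. (j,k) \<in> A} then (1::real) else 0))"
    by (rule sum.cong[OF refl], insert G, auto simp: sr_def simple_digraph_def)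
  also have "\<dots> = real (card {j. (k,j) \<in> A}) - real (card {j. (j,k) \<in> A})"
    unfolding sum_subtractf
    by (subst sum_indicator_card, insert G, force simp: simple_digraph_def,
        subst sum_indicator_card, insert G, force simp: simple_digraph_def, simp)
  finally show ?thesis unfolding dr_def outdeg_def indeg_def .
qed

lemma count_sum_real:
  fixes g :: "'a \<Rightarrow> real"
  shows "set xs \<subseteq> X \<Longrightarrow> finite X \<Longrightarrow> (\<Sum>x\<in>X. real (count_list xs x) * g x) = sum_list (map g xs)"
proof (induction xs)
  case Nil then show ?case by simp
next
  case (Cons a xs)
  have "(\<Sum>x\<in>X. real (count_list (a#xs) x) * g x) = (\<Sum>x\<in>X. real (count_list xs x) * g x + (if x = a then g x else 0))"
    by (rule sum.cong, auto simp: algebra_simps)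
  also have "\<dots> = (\<Sum>x\<in>X. real (count_list xs x) * g x) + g a"
    using Cons.prems by (simp add: sum.distrib)
  finally show ?case using Cons by simp
qed

lemma lin_prod_nz: "(\<Prod>a\<leftarrow>as. [:- a, 1:]) \<noteq> (0 :: complex poly)"
  by (simp add: prod_list_zero_iff image_iff pCons_eq_0_iff)

lemma order_lin_prod: "order \<mu> (\<Prod>a\<leftarrow>as. [:- a, 1::complex:]) = count_list as \<mu>"
proof (induction as)
  case Nil then show ?case by simp
next
  case (Cons a as)
  have "order \<mu> (\<Prod>a\<leftarrow>a#as. [:- a, 1:]) = order \<mu> [:- a, 1:] + order \<mu> (\<Prod>a\<leftarrow>as. [:- a, 1:])"
    using lin_prod_nz[of "a#as"] by (simp add: order_mult del: mult_pCons_left)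
  also have "order \<mu> [:- a, 1:] = (if \<mu> = a then 1 else 0)"
    by (cases "\<mu> = a", auto simp: order_linear intro!: order_0I)
  finally show ?case using Cons by simp
qed

lemma roots_order_sum: fixes as :: "complex list"
  shows "(\<Sum>\<mu>\<in>{\<mu>. poly (\<Prod>a\<leftarrow>as. [:-a,1:]) \<mu> = 0}. real (order \<mu> (\<Prod>a\<leftarrow>as. [:-a,1:])) * cmod \<mu>)
    = sum_list (map cmod as)"
proof -
  have fin: "finite {\<mu>. poly (\<Prod>a\<leftarrow>as. [:-a,1:]) \<mu> = 0}"
    by (rule poly_roots_finite[OF lin_prod_nz])
  have sub: "set as \<subseteq> {\<mu>. poly (\<Prod>a\<leftarrow>as. [:-a,1:]) \<mu> = 0}"
  proof
    fix x assume "x \<in> set as"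
    then show "x \<in> {\<mu>. poly (\<Prod>a\<leftarrow>as. [:-a,1:]) \<mu> = 0}"
      by (induction as, auto)
  qed
  show ?thesis unfolding order_lin_prod by (rule count_sum_real[OF sub fin])
qed

lemma SLE_tri: assumes U: "unitary n U" and T: "T \<in> carrier_mat n n" and ut: "upper_triangular T"
  and eq: "skew_lap n A = U * T * cadj U"
  shows "SLE n A = (\<Sum>i<n. cmod (T $$ (i,i)))"
proof -
  have Uc: "U \<in> carrier_mat n n" using U unitary_def by auto
  have "similar_mat (skew_lap n A) T"
    by (rule similar_matI[of _ _ U "cadj U" n], insert U Uc T sl_carrier[of n A] eq, auto simp: unitary_def)
  then have cp: "char_poly (skew_lap n A) = char_poly T" by (rule char_poly_similar)
  also have "\<dots> = (\<Prod>a\<leftarrow>diag_mat T. [:- a, 1:])" by (rule char_poly_upper_triangular[OF T ut])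
  finally have cp: "char_poly (skew_lap n A) = (\<Prod>a\<leftarrow>diag_mat T. [:- a, 1:])" .
  have "SLE n A = sum_list (map cmod (diag_mat T))" unfolding SLE_def cp by (rule roots_order_sum)
  also have "diag_mat T = map (\<lambda>i. T $$ (i,i)) [0..<n]" unfolding diag_mat_def using T by auto
  also have "sum_list (map cmod (map (\<lambda>i. T $$ (i,i)) [0..<n])) = (\<Sum>i<n. cmod (T $$ (i,i)))"
    by (simp add: sum_list_distinct_conv_sum_set lessThan_atLeast0 comp_def)
  finally show ?thesis .
qed

lemma L_sq: assumes G: "simple_digraph n A"
  shows "((if i = j then dr A i else 0) - sr A i j)^2 = (if i = j then (dr A i)^2 else 0) + (if (i,j) \<in> A \<or> (j,i) \<in> A then 1 else 0)"
  using G unfolding sr_def simple_digraph_def by (auto simp: power2_eq_square)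

lemma frob_sl: assumes G: "simple_digraph n A"
  shows "frob (skew_lap n A) = 2 * M1 n A"
proof -
  have sl: "skew_lap n A \<in> carrier_mat n n" by (rule sl_carrier)
  have "frob (skew_lap n A) = (\<Sum>i<n. \<Sum>j<n. (if i = j then (dr A i)^2 else 0) + (if (i,j) \<in> A \<or> (j,i) \<in> A then 1 else 0))"
    unfolding frob_def using sl
    by (auto simp: sl_entry L_sq[OF G] simp del: of_real_diff intro!: sum.cong)
  also have "\<dots> = (\<Sum>i<n. (dr A i)^2) + (\<Sum>i<n. \<Sum>j<n. (if (i,j) \<in> A \<union> A\<inverse> then 1 else 0))"
    by (simp add: sum.distrib)
  also have "(\<Sum>i<n. \<Sum>j<n. (if (i,j) \<in> A \<union> A\<inverse> then (1::real) else 0)) = (\<Sum>p\<in>{..<n} \<times> {..<n}. (if p \<in> A \<union> A\<inverse> then 1 else 0))"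
    by (subst sum.cartesian_product, rule sum.cong, auto split: if_splits)
  also have "\<dots> = real (card (({..<n} \<times> {..<n}) \<inter> (A \<union> A\<inverse>)))"
    by (subst sum.inter_restrict[symmetric], auto)
  also have "({..<n} \<times> {..<n}) \<inter> (A \<union> A\<inverse>) = A \<union> A\<inverse>"
    using G unfolding simple_digraph_def by auto
  also have "card (A \<union> A\<inverse>) = card A + card (A\<inverse>)"
  proof (rule card_Un_disjoint)
    have "A \<subseteq> {0..<n} \<times> {0..<n}" using G unfolding simple_digraph_def by auto
    then show fA: "finite A" by (rule finite_subset, auto)
    show "finite (A\<inverse>)" using fA by simp
    show "A \<inter> A\<inverse> = {}" using G unfolding simple_digraph_def by auto
  qed
  finally show ?thesis unfolding M1_def dr_def by simp
qed

lemma sl_kernel_closed: assumes G: "simple_digraph n G" and cl: "\<forall>i j. (i,j) \<in> G \<longrightarrow> (i \<in> C \<longleftrightarrow> j \<in> C)"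
  shows "skew_lap n G *\<^sub>v vec n (\<lambda>i. if i \<in> C then c else 0) = 0\<^sub>v n"
proof (rule eq_vecI)
  define x where "x = vec n (\<lambda>i. if i \<in> C then c else 0)"
  have xc: "x \<in> carrier_vec n" unfolding x_def by auto
  fix k assume "k < dim_vec (0\<^sub>v n :: complex vec)"
  then have k: "k < n" by auto
  have "(skew_lap n G *\<^sub>v x) $ k = (\<Sum>j<n. skew_lap n G $$ (k,j) * x$j)"
    by (rule mult_vec_entry[OF sl_carrier xc k])
  also have "\<dots> = (\<Sum>j<n. (if k = j then complex_of_real (dr G k) * x$k else 0) - complex_of_real (sr G k j) * x$k)"
  proof (rule sum.cong[OF refl])
    fix j assume j: "j \<in> {..<n}"
    have "complex_of_real (sr G k j) * x$j = complex_of_real (sr G k j) * x$k"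
    proof (cases "sr G k j = 0")
      case False
      then have "(k,j) \<in> G \<or> (j,k) \<in> G" unfolding sr_def by (auto split: if_splits)
      then have "k \<in> C \<longleftrightarrow> j \<in> C" using cl by blast
      then show ?thesis using j k unfolding x_def by auto
    qed simp
    then show "skew_lap n G $$ (k,j) * x$j = (if k = j then complex_of_real (dr G k) * x$k else 0) - complex_of_real (sr G k j) * x$k"
      using j k by (auto simp: sl_entry algebra_simps)
  qed
  also have "\<dots> = complex_of_real (dr G k) * x$k - complex_of_real (\<Sum>j<n. sr G k j) * x$k"
    using k by (simp add: sum_subtractf sum_distrib_right)
  also have "\<dots> = 0" using row_sum[OF G k] by simp
  finally show "(skew_lap n G *\<^sub>v vec n (\<lambda>i. if i \<in> C then c else 0)) $ k = 0\<^sub>v n $ k"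
    using k unfolding x_def by simp
qed (insert sl_carrier[of n G], auto)

lemma rdelta1: "(\<Sum>l<(n::nat). (if i = l then a else 0) * f l) = (if i < n then a * f i else (0::real))"
  by (subst sum.cong[OF refl, of _ _ "\<lambda>l. if i = l then a * f l else 0"], auto simp: sum.delta')

lemma rdelta2: "(\<Sum>l<(n::nat). f l * (if i = l then a else 0)) = (if i < n then f i * a else (0::real))"
  by (subst sum.cong[OF refl, of _ _ "\<lambda>l. if i = l then f l * a else 0"], auto simp: sum.delta')

lemma rdelta3: "(\<Sum>l<(n::nat). (if l = i then g l else 0) * f l) = (if i < n then g i * f i else (0::real))"
  by (subst sum.cong[OF refl, of _ _ "\<lambda>l. if l = i then g l * f l else 0"], auto simp: sum.delta)

lemma rdelta4: "(\<Sum>l<(n::nat). f l * (if l = i then g l else 0)) = (if i < n then f i * g i else (0::real))"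
  by (subst sum.cong[OF refl, of _ _ "\<lambda>l. if l = i then f l * g l else 0"], auto simp: sum.delta)

lemma normal_real:
  fixes d :: "nat \<Rightarrow> real" and s :: "nat \<Rightarrow> nat \<Rightarrow> real"
  assumes anti: "\<And>a b. s b a = - s a b" and i: "i < n" and j: "j < n"
  defines "L \<equiv> \<lambda>a b. (if a = b then d a else 0) - s a b"
  shows "(\<Sum>l<n. L i l * L j l) - (\<Sum>l<n. L l i * L l j) = 2 * (d i - d j) * s i j"
proof -
  have e1: "(\<Sum>l<n. L i l * L j l) = (\<Sum>l<n. (if i = l then d i else 0) * (if j = l then d j else 0))
     - (\<Sum>l<n. (if i = l then d i else 0) * s j l) - (\<Sum>l<n. s i l * (if j = l then d j else 0))
     + (\<Sum>l<n. s i l * s j l)"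
    unfolding L_def by (simp add: algebra_simps sum.distrib sum_subtractf)
  have e2: "(\<Sum>l<n. L l i * L l j) = (\<Sum>l<n. (if l = i then d l else 0) * (if l = j then d l else 0))
     - (\<Sum>l<n. (if l = i then d l else 0) * s l j) - (\<Sum>l<n. s l i * (if l = j then d l else 0))
     + (\<Sum>l<n. s l i * s l j)"
    unfolding L_def by (simp add: algebra_simps sum.distrib sum_subtractf)
  have e3: "(\<Sum>l<n. s l i * s l j) = (\<Sum>l<n. s i l * s j l)"
    by (rule sum.cong[OF refl], subst (1 2) anti, simp)
  have e4: "(\<Sum>l<n. (if l = i then d l else 0) * (if l = j then d l else 0)) = (\<Sum>l<n. (if i = l then d i else 0) * (if j = l then d j else 0))"
    by (rule sum.cong, auto)
  have e5: "(\<Sum>l<n. (if l = i then d l else 0) * s l j) = d i * s i j"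
    using i by (simp add: rdelta3)
  have e6: "(\<Sum>l<n. s l i * (if l = j then d l else 0)) = s j i * d j"
    using j by (simp add: rdelta4)
  have e7: "(\<Sum>l<n. (if i = l then d i else 0) * s j l) = d i * s j i"
    using i by (simp add: rdelta1)
  have e8: "(\<Sum>l<n. s i l * (if j = l then d j else 0)) = s i j * d j"
    using j by (simp add: rdelta2)
  show ?thesis unfolding e1 e2 e3 e4 e5 e6 e7 e8 using anti[of i j] by (simp add: algebra_simps)
qed

lemma sl_normal_entry: assumes G: "simple_digraph n A" and i: "i < n" and j: "j < n"
  shows "(skew_lap n A * cadj (skew_lap n A)) $$ (i,j) - (cadj (skew_lap n A) * skew_lap n A) $$ (i,j)
     = complex_of_real (2 * (dr A i - dr A j) * sr A i j)"
proof -
  let ?X = "skew_lap n A"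
  let ?L = "\<lambda>a b. (if a = b then dr A a else 0) - sr A a b"
  have X: "?X \<in> carrier_mat n n" by (rule sl_carrier)
  have "(?X * cadj ?X) $$ (i,j) = (\<Sum>l<n. ?X $$ (i,l) * cadj ?X $$ (l,j))"
    by (rule mult_entry[of _ n n _ n], insert X i j, auto)
  also have "\<dots> = complex_of_real (\<Sum>l<n. ?L i l * ?L j l)"
    unfolding of_real_sum by (rule sum.cong[OF refl], insert X i j, auto simp: sl_entry simp del: of_real_diff)
  finally have a: "(?X * cadj ?X) $$ (i,j) = complex_of_real (\<Sum>l<n. ?L i l * ?L j l)" .
  have "(cadj ?X * ?X) $$ (i,j) = (\<Sum>l<n. cadj ?X $$ (i,l) * ?X $$ (l,j))"
    by (rule mult_entry[of _ n n _ n], insert X i j, auto)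
  also have "\<dots> = complex_of_real (\<Sum>l<n. ?L l i * ?L l j)"
    unfolding of_real_sum by (rule sum.cong[OF refl], insert X i j, auto simp: sl_entry simp del: of_real_diff)
  finally have b: "(cadj ?X * ?X) $$ (i,j) = complex_of_real (\<Sum>l<n. ?L l i * ?L l j)" .
  show ?thesis unfolding a b of_real_diff[symmetric]
    using normal_real[of "sr A" i n j "dr A", OF sr_antisym[OF G] i j] by simp
qed

lemma euler_from_normal: assumes G: "simple_digraph n A"
  and nm: "\<forall>i<n. \<forall>j<n. (dr A i - dr A j) * sr A i j = 0"
  shows "\<forall>i<n. dr A i = 0"
proof -
  have "(\<Sum>i<n. (dr A i)^2) = (\<Sum>i<n. \<Sum>j<n. dr A i * sr A i j)"
    by (rule sum.cong[OF refl], simp add: sum_distrib_left[symmetric] row_sum[OF G] power2_eq_square)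
  also have "\<dots> = (\<Sum>i<n. \<Sum>j<n. dr A j * sr A i j)"
    using nm by (intro sum.cong refl, simp add: algebra_simps)
  also have "\<dots> = (\<Sum>j<n. \<Sum>i<n. dr A j * sr A i j)" by (rule sum.swap)
  also have "\<dots> = (\<Sum>j<n. -((dr A j)^2))"
  proof (rule sum.cong[OF refl])
    fix j assume j: "j \<in> {..<n}"
    have "(\<Sum>i<n. dr A j * sr A i j) = (\<Sum>i<n. - dr A j * sr A j i)"
      by (rule sum.cong[OF refl], subst sr_antisym[OF G], simp)
    also have "\<dots> = - dr A j * (\<Sum>i<n. sr A j i)" by (simp add: sum_distrib_left)
    finally have "(\<Sum>i<n. dr A j * sr A i j) = - dr A j * (\<Sum>i<n. sr A j i)" .
    then show "(\<Sum>i<n. dr A j * sr A i j) = -((dr A j)^2)" using row_sum[OF G, of j] j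
      by (simp add: power2_eq_square)
  qed
  finally have "(\<Sum>i<n. (dr A i)^2) = 0" by (simp add: sum_negf)
  then have "\<forall>i\<in>{..<n}. (dr A i)^2 = 0" by (subst (asm) sum_nonneg_eq_0_iff, auto)
  then show ?thesis by auto
qed

lemma poly_lin_prod: "poly (\<Prod>a\<leftarrow>as. [:-a,1:]) x = (\<Prod>a\<leftarrow>as. x - (a::complex))"
  by (induction as, auto simp: algebra_simps)

lemma char_poly_sym:
  fixes M :: "complex mat"
  assumes M: "M \<in> carrier_mat n n" and anti: "\<forall>i<n. \<forall>j<n. M$$(j,i) = - M$$(i,j)"
  shows "poly (char_poly M) (-x) = (-1)^n * poly (char_poly M) x"
proof -
  let ?X = "- char_matrix M x"
  have Xc: "?X \<in> carrier_mat n n" using M by simp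
  have eq: "- char_matrix M (-x) = (-1) \<cdot>\<^sub>m transpose_mat ?X"
  proof (rule eq_matI)
    fix i j assume "i < dim_row ((-1) \<cdot>\<^sub>m transpose_mat ?X)" "j < dim_col ((-1) \<cdot>\<^sub>m transpose_mat ?X)"
    then have ij: "i < n" "j < n" using M by (auto simp: char_matrix_def)
    show "(- char_matrix M (-x)) $$ (i,j) = ((-1) \<cdot>\<^sub>m transpose_mat ?X) $$ (i,j)"
      using ij M anti[rule_format, OF ij(1) ij(2)] unfolding char_matrix_def by auto
  qed (insert M, auto simp: char_matrix_def)
  have "poly (char_poly M) (-x) = det (- char_matrix M (-x))" by (rule char_poly_matrix[OF M])
  also have "\<dots> = (-1)^n * det (transpose_mat ?X)" unfolding eq using Xc by (simp add: carrier_matD)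
  also have "det (transpose_mat ?X) = det ?X" by (rule det_transpose[OF Xc])
  also have "det ?X = poly (char_poly M) x" by (rule char_poly_matrix[OF M, symmetric])
  finally show ?thesis .
qed

lemma skew_parity:
  fixes M T :: "complex mat" and n q :: nat
  assumes M: "M \<in> carrier_mat n n" and anti: "\<forall>i<n. \<forall>j<n. M$$(j,i) = - M$$(i,j)"
    and sim: "similar_mat M T" and T: "T \<in> carrier_mat n n" and ut: "upper_triangular T"
    and z: "\<forall>i<q. T$$(i,i) = 0" and nz: "\<forall>i. q \<le> i \<and> i < n \<longrightarrow> T$$(i,i) \<noteq> 0" and qn: "q \<le> n"
  shows "even (n - q)"
proof -
  have cp: "char_poly M = (\<Prod>a\<leftarrow>diag_mat T. [:- a, 1:])"
    using char_poly_similar[OF sim] char_poly_upper_triangular[OF T ut] by simp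
  have dm: "diag_mat T = map (\<lambda>i. T $$ (i,i)) [0..<n]" unfolding diag_mat_def using T by auto
  define g where "g = (\<Prod>i\<in>{q..<n}. [:- T$$(i,i), 1:])"
  have pg: "\<And>x. poly g x = (\<Prod>i\<in>{q..<n}. x - T$$(i,i))" unfolding g_def by (simp add: poly_prod)
  have pv: "\<And>x. poly (char_poly M) x = x^q * poly g x"
  proof -
    fix x
    have "poly (char_poly M) x = (\<Prod>a\<leftarrow>diag_mat T. x - a)" unfolding cp poly_lin_prod ..
    also have "\<dots> = (\<Prod>i\<in>{0..<n}. x - T$$(i,i))" unfolding dm map_map comp_def
      by (subst prod.distinct_set_conv_list[symmetric], auto)
    also have "\<dots> = (\<Prod>i\<in>{0..<q}. x - T$$(i,i)) * (\<Prod>i\<in>{q..<n}. x - T$$(i,i))"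
      by (rule prod.atLeastLessThan_concat[symmetric], insert qn, auto)
    also have "(\<Prod>i\<in>{0..<q}. x - T$$(i,i)) = x^q" using z by simp
    finally show "poly (char_poly M) x = x^q * poly g x" unfolding pg .
  qed
  define h where "h = Polynomial.smult ((-1)^q) (pcompose g [:0,-1:]) - Polynomial.smult ((-1)^n) g"
  have ph: "\<And>x. poly h x = (-1)^q * poly g (-x) - (-1)^n * poly g x"
    unfolding h_def by (simp add: poly_pcompose)
  have ph0: "\<And>x. x \<noteq> 0 \<Longrightarrow> poly h x = 0"
  proof -
    fix x :: complex assume x: "x \<noteq> 0"
    have a: "(-x)^q * poly g (-x) = (-1)^n * (x^q * poly g x)"
      using char_poly_sym[OF M anti, of x] unfolding pv .
    have b: "(-x)^q = (-1)^q * x^q" by (rule power_minus)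
    have c: "(-1)^q * x^q * poly g (-x) = (-1)^n * (x^q * poly g x)" using a unfolding b .
    have "x^q * ((-1)^q * poly g (-x) - (-1)^n * poly g x) = (-1)^q * x^q * poly g (-x) - (-1)^n * (x^q * poly g x)"
      by (simp only: right_diff_distrib mult.assoc mult.left_commute)
    then have "x^q * ((-1)^q * poly g (-x) - (-1)^n * poly g x) = 0" unfolding c by simp
    then show "poly h x = 0" unfolding ph using x by simp
  qed
  have h0: "h = 0"
  proof (rule ccontr)
    assume "h \<noteq> 0"
    then have "finite {x. poly h x = 0}" by (rule poly_roots_finite)
    moreover have "UNIV - {0} \<subseteq> {x. poly h x = 0}" using ph0 by auto
    ultimately have "finite (UNIV - {0::complex})" by (rule finite_subset[rotated])
    then have "finite (UNIV :: complex set)" by simp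
    then show False using infinite_UNIV_char_0 by auto
  qed
  have "poly h 0 = 0" unfolding h0 by simp
  then have "((-1)^q - (-1)^n) * poly g 0 = 0" unfolding ph by (simp add: algebra_simps)
  moreover have "poly g 0 \<noteq> 0" unfolding pg using nz by auto
  ultimately have e: "(-1::complex)^q = (-1)^n" by simp
  have f1: "(-1::complex)^q * (-1)^(n-q) = (-1)^n" using qn by (simp add: power_add[symmetric])
  have "(-1::complex)^q * (-1)^(n-q) = (-1)^q * 1" unfolding f1 e[symmetric] by simp
  then have "(-1::complex)^(n-q) = 1" by (subst (asm) mult_left_cancel, auto)
  then show ?thesis by (cases "even (n-q)", auto)
qed

definition uvec :: "nat \<Rightarrow> nat set \<Rightarrow> complex vec" where
  "uvec n S = vec n (\<lambda>i. if i \<in> S then complex_of_real (1 / sqrt (real (card S))) else 0)"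

lemma uvec_carrier[simp]: "uvec n S \<in> carrier_vec n" unfolding uvec_def by auto

lemma uvec_index: "i < n \<Longrightarrow> uvec n S $ i = (if i \<in> S then complex_of_real (1 / sqrt (real (card S))) else 0)"
  unfolding uvec_def by auto

lemma cinner_uvec_same: assumes S: "S \<subseteq> {..<n}" "S \<noteq> {}"
  shows "cinner n (uvec n S) (uvec n S) = 1"
proof -
  have fin: "finite S" using S finite_subset by blast
  then have cS: "real (card S) > 0" using S by (simp add: card_gt_0_iff)
  have "cinner n (uvec n S) (uvec n S) = complex_of_real (\<Sum>l<n. (if l \<in> S then 1 else 0) * (1 / real (card S)))"
    unfolding cinner_def of_real_sum
  proof (rule sum.cong[OF refl])
    fix l assume l: "l \<in> {..<n}"
    define r where "r = 1 / sqrt (real (card S))"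
    have rr: "r * r = 1 / real (card S)" unfolding r_def using cS by (simp add: field_simps)
    have "cnj (uvec n S $ l) * uvec n S $ l = complex_of_real ((if l \<in> S then 1 else 0) * (r * r))"
      using l by (auto simp: uvec_index r_def[symmetric] simp flip: of_real_mult)
    then show "cnj (uvec n S $ l) * uvec n S $ l = complex_of_real ((if l \<in> S then 1 else 0) * (1 / real (card S)))"
      unfolding rr .
  qed
  also have "(\<Sum>l<n. (if l \<in> S then 1 else 0) * (1 / real (card S))) = real (card S) * (1 / real (card S))"
    unfolding sum_distrib_right[symmetric] by (subst sum_indicator_card[OF S(1)], simp)
  also have "\<dots> = 1" using cS by simp
  finally show ?thesis by simp
qed

lemma cinner_uvec_disj: assumes "S1 \<inter> S2 = {}"
  shows "cinner n (uvec n S1) (uvec n S2) = 0"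
  unfolding cinner_def by (rule sum.neutral, insert assms, auto simp: uvec_index)

lemma orth_sets: assumes sub: "\<forall>S\<in>set Ss. S \<subseteq> {..<n} \<and> S \<noteq> {}"
  and disj: "\<forall>a<length Ss. \<forall>b<length Ss. a \<noteq> b \<longrightarrow> Ss!a \<inter> Ss!b = {}"
  shows "orthonormal n (map (uvec n) Ss)"
  unfolding orthonormal_def
proof (intro conjI allI impI ballI)
  fix v assume "v \<in> set (map (uvec n) Ss)" then show "v \<in> carrier_vec n" by auto
next
  fix a b assume a: "a < length (map (uvec n) Ss)" and b: "b < length (map (uvec n) Ss)"
  show "cinner n (map (uvec n) Ss ! a) (map (uvec n) Ss ! b) = (if a = b then 1 else 0)"
  proof (cases "a = b")
    case True then show ?thesis using a sub by (auto intro!: cinner_uvec_same)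
  next
    case False then show ?thesis using a b disj by (auto intro!: cinner_uvec_disj)
  qed
qed

lemma cdelta1: "(\<Sum>l<(n::nat). (if l = i then a else 0) * f l) = (if i < n then a * f i else (0::complex))"
  by (subst sum.cong[OF refl, of _ _ "\<lambda>l. if l = i then a * f l else 0"], auto simp: sum.delta)

lemma cdelta2: "(\<Sum>l<(n::nat). f l * (if l = i then a else 0)) = (if i < n then f i * a else (0::complex))"
  by (subst sum.cong[OF refl, of _ _ "\<lambda>l. if l = i then f l * a else 0"], auto simp: sum.delta)

lemma cs_identity:
  fixes a :: "nat \<Rightarrow> real"
  assumes K: "card I > 0"
  shows "(\<Sum>i\<in>I. (a i - (\<Sum>j\<in>I. a j) / card I)^2) = (\<Sum>i\<in>I. (a i)^2) - (\<Sum>j\<in>I. a j)^2 / card I"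
proof -
  define s where "s = (\<Sum>j\<in>I. a j)"
  define K where "K = real (card I)"
  have Kp: "K > 0" using K unfolding K_def by simp
  define m where "m = s / K"
  have "(\<Sum>i\<in>I. (a i - m)^2) = (\<Sum>i\<in>I. (a i)^2 - 2 * m * a i + m^2)"
    by (rule sum.cong[OF refl], simp add: power2_diff mult_ac)
  also have "\<dots> = (\<Sum>i\<in>I. (a i)^2) - 2 * m * (\<Sum>i\<in>I. a i) + K * m^2"
    unfolding K_def by (simp add: sum.distrib sum_subtractf sum_distrib_left)
  finally have "(\<Sum>i\<in>I. (a i - s / K)^2) = (\<Sum>i\<in>I. (a i)^2) - 2 * (s / K) * (\<Sum>i\<in>I. a i) + K * (s/K)^2"
    unfolding m_def .
  also have "\<dots> = (\<Sum>i\<in>I. (a i)^2) - s^2 / K"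
    unfolding s_def[symmetric] using Kp by (simp add: field_simps power2_eq_square)
  finally show ?thesis unfolding s_def K_def .
qed

lemma ineq_analysis:
  fixes a :: "nat \<Rightarrow> real"
  assumes K: "card I > 0" and fin: "finite I" and nn: "\<forall>i\<in>I. a i \<ge> 0"
    and DF: "(\<Sum>i\<in>I. (a i)^2) \<le> F" and Fp: "F > 0"
    and eq: "(\<Sum>i\<in>I. a i) = sqrt (real (card I) * F)"
  shows "(\<Sum>i\<in>I. (a i)^2) = F \<and> (\<forall>i\<in>I. a i > 0)"
proof -
  define s where "s = (\<Sum>j\<in>I. a j)"
  define K where "K = real (card I)"
  have Kp: "K > 0" using K unfolding K_def by simp
  have s2: "s^2 = K * F" unfolding s_def eq K_def using Kp Fp K by simp
  have sp: "s > 0" unfolding s_def eq using Kp Fp K by simp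
  have cs: "(\<Sum>i\<in>I. (a i - s / K)^2) = (\<Sum>i\<in>I. (a i)^2) - F"
    using cs_identity[OF K, of a] unfolding s_def[symmetric] K_def[symmetric] s2 using Kp by simp
  have "(\<Sum>i\<in>I. (a i - s / K)^2) \<ge> 0" by (rule sum_nonneg, simp)
  with cs DF have DeqF: "(\<Sum>i\<in>I. (a i)^2) = F" by simp
  with cs have "(\<Sum>i\<in>I. (a i - s / K)^2) = 0" by simp
  then have "\<forall>i\<in>I. (a i - s / K)^2 = 0" using fin by (subst (asm) sum_nonneg_eq_0_iff, auto)
  then have "\<forall>i\<in>I. a i = s / K" by auto
  then have "\<forall>i\<in>I. a i > 0" using sp Kp by auto
  with DeqF show ?thesis by simp
qed

lemma cinner_col: assumes U: "U \<in> carrier_mat n n" and a: "a < n" and b: "b < n"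
  shows "cinner n (col U a) (col U b) = (cadj U * U) $$ (a,b)"
proof -
  have "(cadj U * U) $$ (a,b) = (\<Sum>l<n. cadj U $$ (a,l) * U $$ (l,b))"
    by (rule mult_entry[of _ n n _ n], insert U a b, auto)
  then show ?thesis unfolding cinner_def using U a b by auto
qed

lemma odd_comp:
  assumes G: "simple_digraph n A" and eul: "\<forall>v<n. dr A v = 0"
    and K: "\<forall>x\<in>carrier_vec n. skew_lap n A *\<^sub>v x = 0\<^sub>v n \<longrightarrow> (\<forall>C\<in>components n A. \<forall>v\<in>C. \<forall>w\<in>C. x$v = x$w)"
    and C: "C \<in> components n A"
  shows "odd (card C)"
proof -
  have Csub: "C \<subseteq> {..<n}" by (rule comp_sub[OF G C])
  have Cne: "C \<noteq> {}" by (rule comp_nonempty[OF C])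
  have finC: "finite C" using Csub finite_subset by blast
  have cC: "card C > 0" using Cne finC by (simp add: card_gt_0_iff)
  have cCn: "card C \<le> n" using card_mono[OF _ Csub] by simp
  have clos: "\<And>i j. (i,j) \<in> A \<Longrightarrow> (i \<in> C \<longleftrightarrow> j \<in> C)" using comp_closed[OF C] by blast
  define AC where "AC = {p\<in>A. fst p \<in> C}"
  have AC1: "\<And>i j. (i,j) \<in> AC \<longleftrightarrow> (i,j) \<in> A \<and> i \<in> C" unfolding AC_def by auto
  have AC2: "\<And>i j. (i,j) \<in> AC \<longleftrightarrow> (i,j) \<in> A \<and> j \<in> C" unfolding AC1 using clos by blast
  have GC: "simple_digraph n AC" using G unfolding simple_digraph_def AC_def by auto
  have srC: "\<And>i j. sr AC i j = (if j \<in> C then sr A i j else 0)"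
    unfolding sr_def using AC1 AC2 by auto
  have drC: "\<And>v. dr AC v = 0"
  proof -
    fix v
    have o: "outdeg AC v = (if v \<in> C then outdeg A v else 0)"
      unfolding outdeg_def using AC1 by (cases "v \<in> C", auto)
    have "{j. (j,v) \<in> AC} = (if v \<in> C then {j. (j,v) \<in> A} else {})"
      using AC2 by auto
    then have i: "indeg AC v = (if v \<in> C then indeg A v else 0)"
      unfolding indeg_def by simp
    show "dr AC v = 0"
    proof (cases "v \<in> C")
      case True
      then have "v < n" using Csub by auto
      then show ?thesis using eul o i True unfolding dr_def by auto
    qed (insert o i, auto simp: dr_def)
  qed
  define M where "M = skew_lap n AC"
  have Mc: "M \<in> carrier_mat n n" unfolding M_def by (rule sl_carrier)
  have Ment: "\<And>i j. i < n \<Longrightarrow> j < n \<Longrightarrow> M $$ (i,j) = complex_of_real (- sr AC i j)"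
    unfolding M_def using drC by (simp add: sl_entry)
  have anti: "\<forall>i<n. \<forall>j<n. M$$(j,i) = - M$$(i,j)"
  proof (intro allI impI)
    fix i j assume ij: "i < n" "j < n"
    have "M$$(j,i) = complex_of_real (- sr AC j i)" using Ment ij by simp
    also have "\<dots> = complex_of_real (sr AC i j)" unfolding sr_antisym[OF GC, of j i] by simp
    also have "\<dots> = - M$$(i,j)" using Ment ij by simp
    finally show "M$$(j,i) = - M$$(i,j)" .
  qed
  have cadjM: "cadj M = - M"
  proof (rule eq_matI)
    fix i j assume "i < dim_row (- M)" "j < dim_col (- M)"
    then have ij: "i < n" "j < n" using Mc by auto
    have "cadj M $$ (i,j) = cnj (M $$ (j,i))" using ij Mc by simp
    also have "\<dots> = M $$ (j,i)" using Ment ij by simp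
    also have "\<dots> = - M $$ (i,j)" by (rule anti[rule_format, OF ij])
    finally show "cadj M $$ (i,j) = (- M) $$ (i,j)" using ij Mc by simp
  qed (insert Mc, auto)
  define R where "R = filter (\<lambda>j. j \<notin> C) [0..<n]"
  have Rd: "distinct R" unfolding R_def by simp
  have Rs: "set R = {0..<n} - C" unfolding R_def by auto
  have lR: "length R = n - card C"
  proof -
    have "length R = card (set R)" using distinct_card[OF Rd] by simp
    also have "\<dots> = card ({0..<n} - C)" unfolding Rs ..
    also have "\<dots> = n - card C" using Csub finC by (subst card_Diff_subset, auto)
    finally show ?thesis .
  qed
  define Ss where "Ss = C # map (\<lambda>j. {j}) R"
  define vs where "vs = map (uvec n) Ss"
  define q where "q = length vs"
  have q: "q = Suc (n - card C)" unfolding q_def vs_def Ss_def using lR by simp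
  have qn: "q \<le> n" using q cC cCn by simp
  have orth: "orthonormal n vs" unfolding vs_def
  proof (rule orth_sets)
    show "\<forall>S\<in>set Ss. S \<subseteq> {..<n} \<and> S \<noteq> {}" unfolding Ss_def using Csub Cne Rs by auto
    show "\<forall>a<length Ss. \<forall>b<length Ss. a \<noteq> b \<longrightarrow> Ss ! a \<inter> Ss ! b = {}"
    proof (intro allI impI)
      fix a b assume a: "a < length Ss" and b: "b < length Ss" and ab: "a \<noteq> b"
      show "Ss ! a \<inter> Ss ! b = {}"
      proof (cases a)
        case 0
        then obtain b' where b': "b = Suc b'" using ab by (cases b, auto)
        then have "b' < length R" using b unfolding Ss_def by auto
        then have "R ! b' \<notin> C" using Rs nth_mem by fastforce
        then show ?thesis using 0 b' unfolding Ss_def using \<open>b' < length R\<close> by auto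
      next
        case (Suc a')
        then have a': "a' < length R" using a unfolding Ss_def by auto
        show ?thesis
        proof (cases b)
          case 0
          then have "R ! a' \<notin> C" using Rs nth_mem a' by fastforce
          then show ?thesis using 0 Suc a' unfolding Ss_def by auto
        next
          case (Suc b')
          then have b': "b' < length R" using b unfolding Ss_def by auto
          have "a' \<noteq> b'" using ab \<open>a = Suc a'\<close> Suc by auto
          then have "R ! a' \<noteq> R ! b'" using Rd a' b' nth_eq_iff_index_eq by blast
          then show ?thesis using Suc \<open>a = Suc a'\<close> a' b' unfolding Ss_def by auto
        qed
      qed
    qed
  qed
  have ker: "\<forall>v\<in>set vs. M *\<^sub>v v = 0\<^sub>v n"
  proof
    fix v assume "v \<in> set vs"
    then obtain S where S: "S \<in> set Ss" and v: "v = uvec n S" unfolding vs_def by auto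
    have cl: "\<forall>i j. (i,j) \<in> AC \<longrightarrow> (i \<in> S \<longleftrightarrow> j \<in> S)"
    proof (cases "S = C")
      case True then show ?thesis using AC1 AC2 by blast
    next
      case False
      then obtain j0 where "j0 \<in> set R" "S = {j0}" using S unfolding Ss_def by auto
      then have "j0 \<notin> C" "S = {j0}" using Rs by auto
      then show ?thesis using AC1 AC2 by blast
    qed
    show "M *\<^sub>v v = 0\<^sub>v n" unfolding v uvec_def M_def by (rule sl_kernel_closed[OF GC cl])
  qed
  have len: "length vs \<le> n" using qn q_def by simp
  obtain U T where U: "unitary n U" and Tc: "T \<in> carrier_mat n n" and ut: "upper_triangular T"
    and TU: "T = cadj U * M * U" and MU: "M = U * T * cadj U"
    and pre: "\<forall>j<length vs. col U j = vs!j \<and> T$$(j,j) = 0"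
    using schur_prescribed[OF Mc orth ker len] by blast
  have Uc: "U \<in> carrier_mat n n" using U unitary_def by auto
  have cT: "cadj T = - T" unfolding TU
    using Uc Mc by (simp add: cadj_mult[of _ n n _ n] cadjM assoc_mult_mat[of _ n n _ n _ n] mult_carrier_mat[of _ n n _ n])
  have Tdiag: "\<And>i j. i < n \<Longrightarrow> j < n \<Longrightarrow> i \<noteq> j \<Longrightarrow> T$$(i,j) = 0"
  proof -
    fix i j assume ij: "i < n" "j < n" "i \<noteq> j"
    show "T$$(i,j) = 0"
    proof (cases "j < i")
      case True then show ?thesis using ut ij Tc by auto
    next
      case False
      then have "i < j" using ij by auto
      then have "T$$(j,i) = 0" using ut ij Tc by auto
      moreover have "cadj T $$ (i,j) = cnj (T$$(j,i))" using ij Tc by simp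
      moreover have "cadj T $$ (i,j) = - T$$(i,j)" unfolding cT using ij Tc by simp
      ultimately show ?thesis by simp
    qed
  qed
  have MUU: "M * U = U * T" unfolding MU
    using Uc Tc U[unfolded unitary_def] by (simp add: assoc_mult_mat[of _ n n _ n _ n] mult_carrier_mat[of _ n n _ n] unitary_cancel2[OF U])
  have nz: "\<forall>i. q \<le> i \<and> i < n \<longrightarrow> T$$(i,i) \<noteq> 0"
  proof (intro allI impI notI)
    fix i assume i: "q \<le> i \<and> i < n" and Tii: "T$$(i,i) = 0"
    define x where "x = col U i"
    have xc: "x \<in> carrier_vec n" unfolding x_def by (rule col_carrier_vec[OF _ Uc], insert i, simp)
    have colT: "col T i = 0\<^sub>v n"
      by (rule eq_vecI, insert Tdiag Tii i Tc, auto)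
    have Mx: "M *\<^sub>v x = 0\<^sub>v n"
    proof -
      have "M *\<^sub>v x = col (M * U) i" unfolding x_def by (rule col_mult2[symmetric, of _ n n _ n], insert Mc Uc i, auto)
      also have "\<dots> = U *\<^sub>v col T i" unfolding MUU by (rule col_mult2[of _ n n _ n], insert Uc Tc i, auto)
      also have "\<dots> = 0\<^sub>v n" unfolding colT
        by (rule eq_vecI, insert Uc, auto simp: scalar_prod_def)
      finally show ?thesis .
    qed
    have orthx: "\<And>m. m < q \<Longrightarrow> cinner n (vs!m) x = 0"
    proof -
      fix m assume m: "m < q"
      have "vs!m = col U m" using pre m q_def by auto
      then have "cinner n (vs!m) x = (cadj U * U) $$ (m,i)" unfolding x_def
        using cinner_col[OF Uc, of m i] m i qn by simp
      also have "\<dots> = 0" using U m i qn unfolding unitary_def by simp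
      finally show "cinner n (vs!m) x = 0" .
    qed
    have nx: "cinner n x x = 1" unfolding x_def using cinner_col[OF Uc, of i i] i U unfolding unitary_def by simp
    define xC where "xC = vec n (\<lambda>v. if v \<in> C then x$v else 0)"
    have xCc: "xC \<in> carrier_vec n" unfolding xC_def by simp
    have SLxC: "skew_lap n A *\<^sub>v xC = 0\<^sub>v n"
    proof (rule eq_vecI)
      fix k assume "k < dim_vec (0\<^sub>v n :: complex vec)"
      then have k: "k < n" by simp
      have "(skew_lap n A *\<^sub>v xC) $ k = (\<Sum>j<n. skew_lap n A $$ (k,j) * xC$j)"
        by (rule mult_vec_entry[OF sl_carrier xCc k])
      also have "\<dots> = (\<Sum>j<n. M $$ (k,j) * x$j)"
        by (rule sum.cong[OF refl], insert k eul, auto simp: sl_entry Ment srC xC_def)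
      also have "\<dots> = (M *\<^sub>v x) $ k" by (rule mult_vec_entry[symmetric, OF Mc xc k])
      also have "\<dots> = 0" unfolding Mx using k by simp
      finally show "(skew_lap n A *\<^sub>v xC) $ k = 0\<^sub>v n $ k" using k by simp
    qed (insert sl_carrier[of n A], auto)
    have const: "\<And>v w. v \<in> C \<Longrightarrow> w \<in> C \<Longrightarrow> x$v = x$w"
    proof -
      fix v w assume v: "v \<in> C" and w: "w \<in> C"
      have "xC$v = xC$w" using K xCc SLxC C v w by blast
      moreover have "v < n" "w < n" using v w Csub by auto
      ultimately show "x$v = x$w" using v w unfolding xC_def by simp
    qed
    have outside: "\<And>j. j < n \<Longrightarrow> j \<notin> C \<Longrightarrow> x$j = 0"
    proof -
      fix j assume j: "j < n" "j \<notin> C"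
      then have "j \<in> set R" using Rs by auto
      then obtain b where b: "b < length R" "R!b = j" by (auto simp: in_set_conv_nth)
      have "vs!(Suc b) = uvec n {j}" unfolding vs_def Ss_def using b by simp
      moreover have "Suc b < q" unfolding q_def vs_def Ss_def using b by simp
      ultimately have "cinner n (uvec n {j}) x = 0" using orthx by metis
      moreover have "cinner n (uvec n {j}) x = x$j"
      proof -
        have "cinner n (uvec n {j}) x = (\<Sum>l<n. (if l = j then 1 else 0) * x$l)"
          unfolding cinner_def by (rule sum.cong[OF refl], auto simp: uvec_index)
        then show ?thesis using j by (simp add: cdelta1)
      qed
      ultimately show "x$j = 0" by simp
    qed
    obtain v0 where v0: "v0 \<in> C" using Cne by auto
    have "vs!0 = uvec n C" unfolding vs_def Ss_def by simp
    then have c0: "cinner n (uvec n C) x = 0" using orthx[of 0] q by simp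
    define c where "c = complex_of_real (1 / sqrt (real (card C)))"
    have cnz: "c \<noteq> 0" unfolding c_def using cC by simp
    have "cinner n (uvec n C) x = c * (\<Sum>l<n. if l \<in> C then x$v0 else 0)"
      unfolding cinner_def sum_distrib_left
    proof (rule sum.cong[OF refl])
      fix l assume l: "l \<in> {..<n}"
      show "cnj (uvec n C $ l) * x $ l = c * (if l \<in> C then x $ v0 else 0)"
      proof (cases "l \<in> C")
        case True
        then have "x$l = x$v0" using const v0 by blast
        then show ?thesis using True l by (simp add: uvec_index c_def)
      next
        case False then show ?thesis using l by (simp add: uvec_index)
      qed
    qed
    also have "(\<Sum>l<n. if l \<in> C then x$v0 else 0) = of_nat (card C) * x$v0"
    proof -
      have "(\<Sum>l<n. if l \<in> C then x$v0 else 0) = (\<Sum>l\<in>{..<n} \<inter> C. x$v0)"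
        by (subst sum.inter_restrict, auto)
      also have "{..<n} \<inter> C = C" using Csub by auto
      finally show ?thesis by simp
    qed
    finally have "x$v0 = 0" using c0 cnz cC by simp
    then have "\<forall>l<n. x$l = 0"
    proof (intro allI impI)
      fix l assume l: "l < n" and x0: "x$v0 = 0"
      show "x$l = 0"
      proof (cases "l \<in> C")
        case True then have "x$l = x$v0" using const v0 by blast
        then show ?thesis using x0 by simp
      next
        case False then show ?thesis using outside l by blast
      qed
    qed
    then have "cinner n x x = 0" unfolding cinner_def by simp
    then show False using nx by simp
  qed
  have sim: "similar_mat M T"
    by (rule similar_matI[of _ _ U "cadj U" n], insert U Uc Tc Mc MU, auto simp: unitary_def)
  have z: "\<forall>i<q. T$$(i,i) = 0" using pre q_def by auto
  have "even (n - q)" by (rule skew_parity[OF Mc anti sim Tc ut z nz qn])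
  then have "even (card C - 1)" unfolding q using cC cCn by (simp add: Suc_diff_le)
  then show ?thesis using cC by (cases "card C", auto)
qed

lemma diag_normal: assumes T: "T \<in> carrier_mat n n" and Td: "\<And>i j. i < n \<Longrightarrow> j < n \<Longrightarrow> i \<noteq> j \<Longrightarrow> T$$(i,j) = 0"
  shows "T * cadj T = cadj T * T"
proof (rule eq_matI)
  fix i j assume "i < dim_row (cadj T * T)" "j < dim_col (cadj T * T)"
  then have ij: "i < n" "j < n" using T by auto
  have "(T * cadj T) $$ (i,j) = (\<Sum>l<n. T$$(i,l) * cadj T $$ (l,j))"
    by (rule mult_entry[of _ n n _ n], insert T ij, auto)
  also have "\<dots> = (\<Sum>l<n. (if l = i then T$$(i,i) else 0) * cnj (T$$(j,l)))"
    by (rule sum.cong[OF refl], insert T ij Td[of i], auto)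
  also have "\<dots> = T$$(i,i) * cnj (T$$(j,i))" using ij by (simp add: cdelta1)
  finally have a: "(T * cadj T) $$ (i,j) = T$$(i,i) * cnj (T$$(j,i))" .
  have "(cadj T * T) $$ (i,j) = (\<Sum>l<n. cadj T $$ (i,l) * T $$ (l,j))"
    by (rule mult_entry[of _ n n _ n], insert T ij, auto)
  also have "\<dots> = (\<Sum>l<n. (if l = i then cnj (T$$(i,i)) else 0) * T$$(l,j))"
    by (rule sum.cong[OF refl], insert T ij Td[of _ i], auto)
  also have "\<dots> = cnj (T$$(i,i)) * T$$(i,j)" using ij by (simp add: cdelta1)
  finally have b: "(cadj T * T) $$ (i,j) = cnj (T$$(i,i)) * T$$(i,j)" .
  show "(T * cadj T) $$ (i,j) = (cadj T * T) $$ (i,j)"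
    unfolding a b using Td[OF ij] Td[OF ij(2) ij(1)] by (cases "i = j", auto simp: mult.commute)
qed (insert T, auto)

lemma empty_case: "C \<in> components n {} \<Longrightarrow> (\<forall>v\<in>C. outdeg {} v = indeg {} v) \<and> odd (card C)"
proof -
  assume "C \<in> components n {}"
  then obtain v where "C = rel {} `` {v}" using comp_elem by blast
  then have "C = {v}" unfolding rel_def by simp
  then show ?thesis unfolding outdeg_def indeg_def by simp
qed

theorem corollary1:
  fixes n :: nat and A :: "(nat \<times> nat) set"
  assumes "simple_digraph n A"
    and "SLE n A = sqrt (2 * M1 n A * (real n - real (card (components n A))))"
  shows "\<forall>C \<in> components n A. (\<forall>v \<in> C. outdeg A v = indeg A v) \<and> odd (card C)"
proof (cases "A = {}")
  case True
  then show ?thesis using empty_case by blast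
next
  case False
  note G = assms(1) and eq = assms(2)
  then obtain i0 j0 where a0: "(i0,j0) \<in> A" using False by auto
  have finA: "finite A" using G unfolding simple_digraph_def by (auto intro: finite_subset)
  define comps where "comps = components n A"
  define p where "p = card comps"
  obtain cs where csd: "distinct cs" and css: "set cs = comps"
    using finite_distinct_list[OF comp_finite[of n A]] unfolding comps_def by auto
  have lcs: "length cs = p" unfolding p_def using distinct_card[OF csd] css by simp
  define vs where "vs = map (uvec n) cs"
  have orth: "orthonormal n vs" unfolding vs_def
  proof (rule orth_sets)
    show "\<forall>S\<in>set cs. S \<subseteq> {..<n} \<and> S \<noteq> {}"
      using css comp_sub[OF G] comp_nonempty unfolding comps_def by blast
    show "\<forall>a<length cs. \<forall>b<length cs. a \<noteq> b \<longrightarrow> cs ! a \<inter> cs ! b = {}"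
    proof (intro allI impI)
      fix a b assume ab: "a < length cs" "b < length cs" "a \<noteq> b"
      then have ne: "cs!a \<noteq> cs!b" using csd nth_eq_iff_index_eq by blast
      have "cs!a \<in> comps" "cs!b \<in> comps" using ab css nth_mem by blast+
      then show "cs ! a \<inter> cs ! b = {}" using ne comp_eq unfolding comps_def by blast
    qed
  qed
  have ker: "\<forall>v\<in>set vs. skew_lap n A *\<^sub>v v = 0\<^sub>v n"
  proof
    fix v assume "v \<in> set vs"
    then obtain C where C: "C \<in> comps" and v: "v = uvec n C" unfolding vs_def using css by auto
    have cl: "\<forall>i j. (i,j) \<in> A \<longrightarrow> (i \<in> C \<longleftrightarrow> j \<in> C)" using comp_closed C unfolding comps_def by blast
    show "skew_lap n A *\<^sub>v v = 0\<^sub>v n" unfolding v uvec_def by (rule sl_kernel_closed[OF G cl])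
  qed
  have pn: "p < n" unfolding p_def comps_def by (rule comp_card_less[OF G a0])
  have len: "length vs \<le> n" unfolding vs_def using lcs pn by simp
  obtain U T where U: "unitary n U" and Tc: "T \<in> carrier_mat n n" and ut: "upper_triangular T"
    and TU: "T = cadj U * skew_lap n A * U" and MU: "skew_lap n A = U * T * cadj U"
    and pre: "\<forall>j<length vs. col U j = vs!j \<and> T$$(j,j) = 0"
    using schur_prescribed[OF sl_carrier orth ker len] by blast
  have Uc: "U \<in> carrier_mat n n" using U unitary_def by auto
  have lvs: "length vs = p" unfolding vs_def using lcs by simp
  have SLEeq: "SLE n A = (\<Sum>i<n. cmod (T$$(i,i)))" by (rule SLE_tri[OF U Tc ut MU])
  have frobT: "frob T = 2 * M1 n A" unfolding TU frob_unitary[OF U sl_carrier] by (rule frob_sl[OF G])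
  define a where "a = (\<lambda>i. cmod (T$$(i,i)))"
  define I where "I = {p..<n}"
  have z: "\<And>i. i < p \<Longrightarrow> a i = 0" unfolding a_def using pre lvs by auto
  have splitn: "\<And>f :: nat \<Rightarrow> real. (\<forall>i<p. f i = 0) \<Longrightarrow> (\<Sum>i<n. f i) = (\<Sum>i\<in>I. f i)"
  proof -
    fix f :: "nat \<Rightarrow> real" assume f0: "\<forall>i<p. f i = 0"
    have "(\<Sum>i<n. f i) = (\<Sum>i\<in>{0..<p}. f i) + (\<Sum>i\<in>{p..<n}. f i)"
      unfolding lessThan_atLeast0 by (rule sum.atLeastLessThan_concat[symmetric], insert pn, auto)
    then show "(\<Sum>i<n. f i) = (\<Sum>i\<in>I. f i)" unfolding I_def using f0 by simp
  qed
  have cardI: "card I = n - p" unfolding I_def by simp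
  have Ipos: "card I > 0" using cardI pn by simp
  have M1pos: "M1 n A > 0"
  proof -
    have "card A > 0" using finA False by (simp add: card_gt_0_iff)
    moreover have "(\<Sum>i<n. (real (outdeg A i) - real (indeg A i))^2) \<ge> 0" by (rule sum_nonneg, simp)
    ultimately show ?thesis unfolding M1_def by simp
  qed
  have Fpos: "frob T > 0" using frobT M1pos by simp
  have diagsum: "(\<Sum>i<n. (a i)^2) \<le> frob T"
  proof -
    have "(\<Sum>i<n. (a i)^2) \<le> (\<Sum>i<n. \<Sum>j<n. (cmod (T$$(i,j)))^2)"
      unfolding a_def by (rule sum_mono, rule member_le_sum, auto)
    then show ?thesis unfolding frob_def using Tc by simp
  qed
  have D: "(\<Sum>i\<in>I. (a i)^2) = (\<Sum>i<n. (a i)^2)" using splitn[of "\<lambda>i. (a i)^2"] z by simp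
  have S: "(\<Sum>i\<in>I. a i) = sqrt (real (card I) * frob T)"
  proof -
    have "(\<Sum>i\<in>I. a i) = SLE n A" unfolding SLEeq using splitn[of a] z unfolding a_def by simp
    also have "\<dots> = sqrt (2 * M1 n A * (real n - real p))" using eq unfolding p_def comps_def .
    also have "2 * M1 n A * (real n - real p) = real (card I) * frob T"
      unfolding frobT cardI using pn by (simp add: of_nat_diff)
    finally show ?thesis .
  qed
  have IA: "(\<Sum>i\<in>I. (a i)^2) = frob T \<and> (\<forall>i\<in>I. a i > 0)"
    by (rule ineq_analysis[OF Ipos _ _ _ Fpos S], insert diagsum D, auto simp: I_def a_def)
  have Tnz: "\<And>i. p \<le> i \<Longrightarrow> i < n \<Longrightarrow> T$$(i,i) \<noteq> 0"
    using IA unfolding I_def a_def by auto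
  have Tdiag: "\<And>i j. i < n \<Longrightarrow> j < n \<Longrightarrow> i \<noteq> j \<Longrightarrow> T$$(i,j) = 0"
  proof -
    fix i j assume ij: "i < n" "j < n" "i \<noteq> j"
    define Off where "Off = (\<lambda>i. \<Sum>j\<in>{..<n}-{i}. (cmod (T$$(i,j)))^2)"
    have Onn: "\<And>i. Off i \<ge> 0" unfolding Off_def by (rule sum_nonneg, simp)
    have fr: "frob T = (\<Sum>i<n. (a i)^2) + (\<Sum>i<n. Off i)"
    proof -
      have "frob T = (\<Sum>i<n. \<Sum>j<n. (cmod (T$$(i,j)))^2)" unfolding frob_def using Tc by simp
      also have "\<dots> = (\<Sum>i<n. (a i)^2 + Off i)"
        unfolding a_def Off_def
      proof (rule sum.cong[OF refl])
        fix k assume k: "k \<in> {..<n}"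
        show "(\<Sum>j<n. (cmod (T$$(k,j)))^2) = (cmod (T$$(k,k)))^2 + (\<Sum>j\<in>{..<n}-{k}. (cmod (T$$(k,j)))^2)"
          by (subst sum.remove[of _ k], insert k, auto)
      qed
      finally show ?thesis by (simp add: sum.distrib)
    qed
    have "(\<Sum>i<n. Off i) = 0" using fr IA D by simp
    then have "\<forall>i\<in>{..<n}. Off i = 0" using Onn by (subst (asm) sum_nonneg_eq_0_iff, auto)
    then have "Off i = 0" using ij by auto
    then have "\<forall>j\<in>{..<n}-{i}. (cmod (T$$(i,j)))^2 = 0" unfolding Off_def
      by (subst (asm) sum_nonneg_eq_0_iff, auto)
    then show "T$$(i,j) = 0" using ij by auto
  qed
  let ?L = "skew_lap n A"
  have cL: "cadj ?L = U * cadj T * cadj U"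
    unfolding MU using Uc Tc by (simp add: cadj_mult[of _ n n _ n] assoc_mult_mat[of _ n n _ n _ n] mult_carrier_mat[of _ n n _ n])
  have n1: "?L * cadj ?L = U * (T * cadj T) * cadj U"
    unfolding cL using Uc Tc U[unfolded unitary_def] MU
    by (simp add: assoc_mult_mat[of _ n n _ n _ n] mult_carrier_mat[of _ n n _ n] unitary_cancel2[OF U])
  have n2: "cadj ?L * ?L = U * (cadj T * T) * cadj U"
    unfolding cL using Uc Tc U[unfolded unitary_def] MU
    by (simp add: assoc_mult_mat[of _ n n _ n _ n] mult_carrier_mat[of _ n n _ n] unitary_cancel2[OF U])
  have normal: "?L * cadj ?L = cadj ?L * ?L" unfolding n1 n2 using diag_normal[OF Tc Tdiag] by simp
  have nm: "\<forall>i<n. \<forall>j<n. (dr A i - dr A j) * sr A i j = 0"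
  proof (intro allI impI)
    fix i j assume ij: "i < n" "j < n"
    have "complex_of_real (2 * (dr A i - dr A j) * sr A i j) = 0"
      using sl_normal_entry[OF G ij] normal by simp
    then show "(dr A i - dr A j) * sr A i j = 0" by simp
  qed
  have eul: "\<forall>v<n. dr A v = 0" by (rule euler_from_normal[OF G nm])
  have K: "\<forall>x\<in>carrier_vec n. ?L *\<^sub>v x = 0\<^sub>v n \<longrightarrow> (\<forall>C\<in>components n A. \<forall>v\<in>C. \<forall>w\<in>C. x$v = x$w)"
  proof (intro ballI impI)
    fix x C v w assume xc: "x \<in> carrier_vec n" and Lx: "?L *\<^sub>v x = 0\<^sub>v n"
      and C: "C \<in> components n A" and v: "v \<in> C" and w: "w \<in> C"
    have vw: "v < n" "w < n" using comp_sub[OF G C] v w by auto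
    define y where "y = cadj U *\<^sub>v x"
    have yc: "y \<in> carrier_vec n" unfolding y_def by (rule mult_mat_vec_carrier[of _ n n], insert Uc xc, auto)
    have Ty: "T *\<^sub>v y = 0\<^sub>v n"
    proof -
      have "T *\<^sub>v y = cadj U *\<^sub>v (?L *\<^sub>v (U *\<^sub>v y))"
        unfolding TU using Uc yc by (simp add: assoc_mult_mat_vec[of _ n n _ n] mult_carrier_mat[of _ n n _ n] sl_carrier)
      also have "U *\<^sub>v y = x" unfolding y_def by (rule unitary_cancel1v[OF U xc])
      also have "cadj U *\<^sub>v (?L *\<^sub>v x) = 0\<^sub>v n" unfolding Lx
        by (rule eq_vecI, insert Uc, auto simp: scalar_prod_def)
      finally show ?thesis .
    qed
    have y0: "\<And>l. p \<le> l \<Longrightarrow> l < n \<Longrightarrow> y$l = 0"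
    proof -
      fix l assume l: "p \<le> l" "l < n"
      have "(T *\<^sub>v y) $ l = (\<Sum>k<n. T$$(l,k) * y$k)" by (rule mult_vec_entry[OF Tc yc], insert l, auto)
      also have "\<dots> = (\<Sum>k<n. (if k = l then T$$(l,l) else 0) * y$k)"
        by (rule sum.cong[OF refl], insert Tdiag l, auto)
      also have "\<dots> = T$$(l,l) * y$l" using l by (simp add: cdelta1)
      finally have "T$$(l,l) * y$l = 0" using Ty l by simp
      then show "y$l = 0" using Tnz[OF l] by simp
    qed
    have xU: "\<And>u. u < n \<Longrightarrow> x$u = (\<Sum>k<n. U$$(u,k) * y$k)"
    proof -
      fix u assume u: "u < n"
      have "x = U *\<^sub>v y" unfolding y_def by (rule unitary_cancel1v[OF U xc, symmetric])
      then show "x$u = (\<Sum>k<n. U$$(u,k) * y$k)" using mult_vec_entry[OF Uc yc u] by simp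
    qed
    have "(\<Sum>k<n. U$$(v,k) * y$k) = (\<Sum>k<n. U$$(w,k) * y$k)"
    proof (rule sum.cong[OF refl])
      fix k assume k: "k \<in> {..<n}"
      show "U$$(v,k) * y$k = U$$(w,k) * y$k"
      proof (cases "k < p")
        case False then show ?thesis using y0 k by auto
      next
        case True
        have colk: "col U k = uvec n (cs!k)" using pre True lvs unfolding vs_def using lcs by auto
        have Uv: "U$$(v,k) = uvec n (cs!k) $ v" using colk[symmetric] vw k Uc by auto
        have Uw: "U$$(w,k) = uvec n (cs!k) $ w" using colk[symmetric] vw k Uc by auto
        have ck: "cs!k \<in> components n A" using True lcs css nth_mem unfolding comps_def by blast
        have "v \<in> cs!k \<longleftrightarrow> w \<in> cs!k" using comp_eq[OF ck C] v w by blast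
        then show ?thesis unfolding Uv Uw using vw by (simp add: uvec_index)
      qed
    qed
    then show "x$v = x$w" using xU vw by simp
  qed
  show ?thesis
  proof
    fix C assume C: "C \<in> components n A"
    have "\<forall>v\<in>C. outdeg A v = indeg A v"
    proof
      fix v assume "v \<in> C"
      then have "v < n" using comp_sub[OF G C] by auto
      then show "outdeg A v = indeg A v" using eul unfolding dr_def by auto
    qed
    moreover have "odd (card C)" by (rule odd_comp[OF G eul K C])
    ultimately show "(\<forall>v\<in>C. outdeg A v = indeg A v) \<and> odd (card C)" ..
  qed
qed

end
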